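(* Let $K\in\hat{\mathcal K}$ and $L=\mathcal A(K)K$. Then $$|L\cap\{y=0,x\ge0,z\ge0\}|=|L\cap\{y=0,x\ge0,z\le0\}|,\qquad |L\cap\{z=0,x\ge0,y\ge0\}|=|L\cap\{z=0,x\le0,y\ge0\}|,$$ $$|\Delta_1(L)|+|\Delta_2(L)|=|\Delta_3(L)|+|\Delta_4(L)|.$$
   Context: $\hat{\mathcal K}$ is the set of centrally symmetric convex bodies in $\mathbb{R}^3$ with $C^\infty$ boundary that are strongly convex ($\frac12\mu_K^2$ has positive definite Hessian on the unit sphere, $\mu_K$ the Minkowski gauge). $\rho_K(x)=\max\{\lambda\ge0:\lambda x\in K\}$, $P(\alpha,\beta)=(\cos\alpha,\sin\alpha\cos\beta,\sin\alpha\sin\beta)$. $\Theta(K)\in(0,\pi)$ is the unique number with $\int_0^{\Theta}\!d\beta\int_0^\pi\rho_K^3(P(\alpha,\beta))\sin\alpha\,d\alpha=\int_{\Theta}^{\pi}\!d\beta\int_0^\pi\rho_K^3(P(\alpha,\beta))\sin\alpha\,d\alpha$. $\Phi(K)\in(0,\pi)$ is the unique number with $\int_0^{\Phi}\rho_K^2(P(\alpha,0))d\alpha=\int_{\Phi}^\pi\rho_K^2(P(\alpha,0))d\alpha$, and $\Psi(K)\in(0,\pi)$ the unique number with $\int_0^{\Psi}\rho_K^2(P(\alpha,\Theta(K)))d\alpha=\int_{\Psi}^\pi\rho_K^2(P(\alpha,\Theta(K)))d\alpha$. $\mathcal A(K)=\begin{pmatrix}1&\cot\Phi(K)&\frac{1}{\sin\Theta(K)\tan\Psi(K)}\\0&1&\cot\Theta(K)\\0&0&1\end{pmatrix}^{-1}$.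 $\Delta_1(L)=L\cap\{x\ge0,y\ge0,z\ge0\}$, $\Delta_2(L)=L\cap\{x\le0,y\ge0,z\ge0\}$, $\Delta_3(L)=L\cap\{x\le0,y\le0,z\ge0\}$, $\Delta_4(L)=L\cap\{x\ge0,y\le0,z\ge0\}$; their measures are volumes, the planar sets' measures are areas. *)

theory Defs
  imports "HOL-Analysis.Analysis"
begin

text \<open>Coordinates of a point p :: real^3 are p$1 = x, p$2 = y, p$3 = z.\<close>

definition convex_body3 :: "(real^3) set \<Rightarrow> bool" where
  "convex_body3 K \<longleftrightarrow> compact K \<and> convex K \<and> interior K \<noteq> {}"

definition centrally_symmetric :: "(real^3) set \<Rightarrow> bool" where
  "centrally_symmetric K \<longleftrightarrow> (\<forall>x\<in>K. - x \<in> K)"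

definition gauge :: "(real^3) set \<Rightarrow> real^3 \<Rightarrow> real" where
  "gauge K x = Inf {t. t > 0 \<and> x \<in> (\<lambda>p. t *\<^sub>R p) ` K}"

definition radial :: "(real^3) set \<Rightarrow> real^3 \<Rightarrow> real" where
  "radial K x = Sup {t. t \<ge> 0 \<and> t *\<^sub>R x \<in> K}"

fun iter_dd :: "(real^3) list \<Rightarrow> (real^3 \<Rightarrow> real) \<Rightarrow> (real^3) set \<Rightarrow> bool" where
  "iter_dd [] f S = continuous_on S f"
| "iter_dd (v # vs) f S =
     ((\<forall>x\<in>S. f differentiable (at x)) \<and> iter_dd vs (\<lambda>x. frechet_derivative f (at x) v) S)"

definition smooth_on3 :: "(real^3 \<Rightarrow> real) \<Rightarrow> (real^3) set \<Rightarrow> bool" where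
  "smooth_on3 f S \<longleftrightarrow> (\<forall>vs. iter_dd vs f S)"

definition hess_form :: "(real^3 \<Rightarrow> real) \<Rightarrow> real^3 \<Rightarrow> real^3 \<Rightarrow> real" where
  "hess_form f u v = frechet_derivative (\<lambda>x. frechet_derivative f (at x) v) (at u) v"

text \<open>The class \<open>\<hat>K\<close>: centrally symmetric convex bodies with C-infinity boundary
  (gauge smooth away from the origin) which are strongly convex.\<close>
definition Khat :: "(real^3) set set" where
  "Khat = {K. convex_body3 K \<and> centrally_symmetric K
              \<and> smooth_on3 (gauge K) (- {0})
              \<and> (\<forall>u. norm u = 1 \<longrightarrow>
                    (\<forall>v. v \<noteq> 0 \<longrightarrow> hess_form (\<lambda>x. (gauge K x)\<^sup>2 / 2) u v > 0))}"

definition Pt :: "real \<Rightarrow> real \<Rightarrow> real^3" where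
  "Pt \<alpha> \<beta> = vector [cos \<alpha>, sin \<alpha> * cos \<beta>, sin \<alpha> * sin \<beta>]"

definition Theta :: "(real^3) set \<Rightarrow> real" where
  "Theta K = (THE \<theta>. 0 < \<theta> \<and> \<theta> < pi \<and>
     integral {0..\<theta>} (\<lambda>\<beta>. integral {0..pi} (\<lambda>\<alpha>. (radial K (Pt \<alpha> \<beta>)) ^ 3 * sin \<alpha>))
   = integral {\<theta>..pi} (\<lambda>\<beta>. integral {0..pi} (\<lambda>\<alpha>. (radial K (Pt \<alpha> \<beta>)) ^ 3 * sin \<alpha>)))"

definition Phi :: "(real^3) set \<Rightarrow> real" where
  "Phi K = (THE \<phi>. 0 < \<phi> \<and> \<phi> < pi \<and>
     integral {0..\<phi>} (\<lambda>\<alpha>. (radial K (Pt \<alpha> 0))\<^sup>2)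
   = integral {\<phi>..pi} (\<lambda>\<alpha>. (radial K (Pt \<alpha> 0))\<^sup>2))"

definition Psi :: "(real^3) set \<Rightarrow> real" where
  "Psi K = (THE \<psi>. 0 < \<psi> \<and> \<psi> < pi \<and>
     integral {0..\<psi>} (\<lambda>\<alpha>. (radial K (Pt \<alpha> (Theta K)))\<^sup>2)
   = integral {\<psi>..pi} (\<lambda>\<alpha>. (radial K (Pt \<alpha> (Theta K)))\<^sup>2))"

definition Amat :: "(real^3) set \<Rightarrow> real^3^3" where
  "Amat K = matrix_inv
     (vector [vector [1, cot (Phi K), 1 / (sin (Theta K) * tan (Psi K))],
              vector [0, 1, cot (Theta K)],
              vector [0, 0, 1]] :: real^3^3)"

definition Delta1 :: "(real^3) set \<Rightarrow> (real^3) set" where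
  "Delta1 L = L \<inter> {p. p$1 \<ge> 0 \<and> p$2 \<ge> 0 \<and> p$3 \<ge> 0}"
definition Delta2 :: "(real^3) set \<Rightarrow> (real^3) set" where
  "Delta2 L = L \<inter> {p. p$1 \<le> 0 \<and> p$2 \<ge> 0 \<and> p$3 \<ge> 0}"
definition Delta3 :: "(real^3) set \<Rightarrow> (real^3) set" where
  "Delta3 L = L \<inter> {p. p$1 \<le> 0 \<and> p$2 \<le> 0 \<and> p$3 \<ge> 0}"
definition Delta4 :: "(real^3) set \<Rightarrow> (real^3) set" where
  "Delta4 L = L \<inter> {p. p$1 \<ge> 0 \<and> p$2 \<le> 0 \<and> p$3 \<ge> 0}"

definition area_y0 :: "(real^3) set \<Rightarrow> real" where
  "area_y0 S = measure lebesgue {q :: real^2. (vector [q$1, 0, q$2] :: real^3) \<in> S}"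

definition area_z0 :: "(real^3) set \<Rightarrow> real" where
  "area_z0 S = measure lebesgue {q :: real^2. (vector [q$1, q$2, 0] :: real^3) \<in> S}"

end

theory Submission
  imports Defs
begin



definition gg :: "'a::euclidean_space set \<Rightarrow> 'a \<Rightarrow> real" where
  "gg C x = Inf {t. t > 0 \<and> x \<in> (\<lambda>p. t *\<^sub>R p) ` C}"

definition rr :: "'a::euclidean_space set \<Rightarrow> 'a \<Rightarrow> real" where
  "rr C x = Sup {t. t \<ge> 0 \<and> t *\<^sub>R x \<in> C}"

lemma mem_scale_iff:
  fixes C :: "'a::euclidean_space set"
  assumes "t > 0"
  shows "x \<in> (\<lambda>p. t *\<^sub>R p) ` C \<longleftrightarrow> x /\<^sub>R t \<in> C"
proof
  assume "x \<in> (\<lambda>p. t *\<^sub>R p) ` C" then show "x /\<^sub>R t \<in> C" using assms by auto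
next
  assume "x /\<^sub>R t \<in> C"
  moreover have "x = t *\<^sub>R (x /\<^sub>R t)" using assms by simp
  ultimately show "x \<in> (\<lambda>p. t *\<^sub>R p) ` C" by blast
qed

locale cbody =
  fixes C :: "'a::euclidean_space set" and r :: real
  assumes cpt: "compact C" and cvx: "convex C" and rpos: "0 < r" and ballC: "ball 0 r \<subseteq> C"
begin

lemma zero_in: "0 \<in> C" using ballC rpos by auto

lemma up_closed:
  assumes "x /\<^sub>R t \<in> C" "0 < t" "t \<le> t'"
  shows "x /\<^sub>R t' \<in> C"
proof -
  have "x /\<^sub>R t' = (t / t') *\<^sub>R (x /\<^sub>R t) + (1 - t / t') *\<^sub>R 0"
    using assms by (simp add: field_simps)
  also have "\<dots> \<in> C"
    using assms zero_in by (intro convexD[OF cvx]) (auto simp: field_simps)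
  finally show ?thesis .
qed

lemma bnd: obtains B where "B > 0" "\<And>c. c \<in> C \<Longrightarrow> norm c \<le> B"
  using compact_imp_bounded[OF cpt] bounded_pos by metis

lemma gg_char:
  assumes "x \<noteq> 0"
  shows "gg C x > 0" "\<And>t. t > 0 \<Longrightarrow> x /\<^sub>R t \<in> C \<longleftrightarrow> gg C x \<le> t"
proof -
  obtain B where B: "B > 0" "\<And>c. c \<in> C \<Longrightarrow> norm c \<le> B" using bnd by blast
  define T where "T = {t. t > 0 \<and> x \<in> (\<lambda>p. t *\<^sub>R p) ` C}"
  have T: "T = {t. t > 0 \<and> x /\<^sub>R t \<in> C}"
    unfolding T_def using mem_scale_iff by blast
  have lb: "t \<ge> norm x / B" if "t \<in> T" for t
  proof -
    from that have t: "t > 0" "x /\<^sub>R t \<in> C" by (auto simp: T)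
    then have "norm x / t \<le> B" using B(2)[of "x /\<^sub>R t"] by (simp add: divide_inverse mult.commute)
    then show ?thesis using t B by (simp add: field_simps)
  qed
  define t0 where "t0 = 2 * norm x / r"
  have "t0 > 0" using assms rpos by (simp add: t0_def)
  have "norm (x /\<^sub>R t0) < r" using assms rpos by (simp add: t0_def)
  then have "t0 \<in> T" using ballC \<open>t0 > 0\<close> by (auto simp: T)
  then have ne: "T \<noteq> {}" by blast
  have bdd: "bdd_below T" using lb by (rule bdd_belowI)
  have ggT: "gg C x = Inf T" by (simp add: gg_def T_def)
  have glb: "gg C x \<ge> norm x / B" unfolding ggT using ne lb by (intro cInf_greatest) auto
  have "norm x / B > 0" using assms B by simp
  then show gpos: "gg C x > 0" using glb by linarith
  have upT: "t' \<in> T" if "t \<in> T" "t \<le> t'" for t t'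
    using that up_closed by (auto simp: T)
  have less: "t \<in> T" if "gg C x < t" for t
  proof -
    from that obtain t1 where "t1 \<in> T" "t1 < t" unfolding ggT using cInf_less_iff[OF ne bdd] by blast
    then show ?thesis using upT by auto
  qed
  have att: "gg C x \<in> T"
  proof -
    let ?m = "gg C x"
    define f where "f n = x /\<^sub>R (?m + inverse (real (Suc n)))" for n
    have "f n \<in> C" for n
    proof -
      have "?m + inverse (real (Suc n)) \<in> T" by (intro less) simp
      then show ?thesis by (simp add: T f_def)
    qed
    moreover
    have lim1: "(\<lambda>n. ?m + inverse (real (Suc n))) \<longlonglongrightarrow> ?m + 0"
      by (intro tendsto_add tendsto_const LIMSEQ_inverse_real_of_nat)
    then have "(\<lambda>n. inverse (?m + inverse (real (Suc n)))) \<longlonglongrightarrow> inverse ?m"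
      using gpos by (intro tendsto_inverse) auto
    then have "f \<longlonglongrightarrow> x /\<^sub>R ?m" unfolding f_def by (intro tendsto_scaleR tendsto_const)
    ultimately have "x /\<^sub>R ?m \<in> C"
      using closed_sequentially[OF compact_imp_closed[OF cpt]] by blast
    then show ?thesis using gpos by (simp add: T)
  qed
  fix t :: real assume "t > 0"
  show "x /\<^sub>R t \<in> C \<longleftrightarrow> gg C x \<le> t"
  proof
    assume "x /\<^sub>R t \<in> C"
    then have "t \<in> T" using \<open>t > 0\<close> by (simp add: T)
    then show "gg C x \<le> t" unfolding ggT using bdd by (rule cInf_lower)
  next
    assume "gg C x \<le> t"
    then have "t \<in> T" using att upT by blast
    then show "x /\<^sub>R t \<in> C" by (simp add: T)
  qed
qed

lemma gg_mem: "x \<noteq> 0 \<Longrightarrow> x \<in> C \<longleftrightarrow> gg C x \<le> 1"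
  using gg_char(2)[of x 1] by simp

lemma gg_hom:
  assumes "x \<noteq> 0" "c > 0"
  shows "gg C (c *\<^sub>R x) = c * gg C x"
proof -
  have cx: "c *\<^sub>R x \<noteq> 0" using assms by simp
  have *: "gg C (c *\<^sub>R x) \<le> t \<longleftrightarrow> c * gg C x \<le> t" if "t > 0" for t
  proof -
    have "gg C (c *\<^sub>R x) \<le> t \<longleftrightarrow> (c *\<^sub>R x) /\<^sub>R t \<in> C" using gg_char(2)[OF cx that] by simp
    also have "(c *\<^sub>R x) /\<^sub>R t = x /\<^sub>R (t / c)" using assms that by (simp add: divide_inverse mult.commute)
    also have "\<dots> \<in> C \<longleftrightarrow> gg C x \<le> t / c" by (rule gg_char(2)[OF assms(1)]) (use assms that in simp)
    also have "\<dots> \<longleftrightarrow> c * gg C x \<le> t" using assms by (simp add: field_simps)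
    finally show ?thesis .
  qed
  have p1: "gg C (c *\<^sub>R x) > 0" using gg_char(1)[OF cx] .
  have p2: "c * gg C x > 0" using gg_char(1)[OF assms(1)] assms by simp
  show ?thesis using *[OF p1] *[OF p2] by linarith
qed

lemma gg_interior:
  assumes "x \<in> interior C" "x \<noteq> 0"
  shows "gg C x < 1"
proof -
  obtain e where e: "e > 0" "ball x e \<subseteq> C" using assms(1) by (meson mem_interior)
  define d where "d = e / (2 * norm x)"
  have d: "d > 0" using e assms by (simp add: d_def)
  have "norm ((1 + d) *\<^sub>R x - x) = d * norm x" using d by (simp add: algebra_simps)
  also have "\<dots> < e" using e assms by (simp add: d_def)
  finally have "(1 + d) *\<^sub>R x \<in> C" using e by (auto simp: dist_norm norm_minus_commute)
  moreover have "(1 + d) *\<^sub>R x \<noteq> 0" using assms d by simp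
  ultimately have "gg C ((1 + d) *\<^sub>R x) \<le> 1" using gg_mem[of "(1+d) *\<^sub>R x"] by blast
  then have "(1 + d) * gg C x \<le> 1" using gg_hom[OF assms(2), of "1+d"] d by simp
  moreover have "gg C x > 0" using gg_char(1)[OF assms(2)] .
  moreover have "gg C x < (1 + d) * gg C x" using d \<open>gg C x > 0\<close> by (simp add: algebra_simps)
  ultimately show ?thesis by linarith
qed

lemma rr_gg:
  assumes "x \<noteq> 0"
  shows "rr C x = 1 / gg C x"
proof -
  have gp: "gg C x > 0" using gg_char(1)[OF assms] .
  have "{t. t \<ge> 0 \<and> t *\<^sub>R x \<in> C} = {0 .. 1 / gg C x}"
  proof (intro set_eqI iffI)
    fix t assume t: "t \<in> {t. t \<ge> 0 \<and> t *\<^sub>R x \<in> C}"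
    show "t \<in> {0 .. 1 / gg C x}"
    proof (cases "t = 0")
      case False
      then have "t > 0" using t by simp
      have "t *\<^sub>R x = x /\<^sub>R (1/t)" by simp
      then have "gg C x \<le> 1 / t" using gg_char(2)[OF assms, of "1/t"] t \<open>t > 0\<close> by simp
      then show ?thesis using \<open>t > 0\<close> gp by (simp add: field_simps)
    qed (use gp in auto)
  next
    fix t assume t: "t \<in> {0 .. 1 / gg C x}"
    show "t \<in> {t. t \<ge> 0 \<and> t *\<^sub>R x \<in> C}"
    proof (cases "t = 0")
      case False
      then have "t > 0" using t by simp
      then have "gg C x \<le> 1 / t" using t gp by (simp add: field_simps)
      then have "x /\<^sub>R (1/t) \<in> C" using gg_char(2)[OF assms, of "1/t"] \<open>t > 0\<close> by simp
      then show ?thesis using \<open>t > 0\<close> by simp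
    qed (use zero_in in auto)
  qed
  then show ?thesis using gp by (simp add: rr_def)
qed

end


lemma vector3_axis: "(vector [a, b, c] :: real^3) = a *\<^sub>R axis 1 1 + b *\<^sub>R axis 2 1 + c *\<^sub>R axis 3 1"
  by (simp add: vec_eq_iff forall_3 axis_def)

lemma has_derivative_vector3:
  assumes "(f1 has_derivative f1') F" "(f2 has_derivative f2') F" "(f3 has_derivative f3') F"
  shows "((\<lambda>x. vector [f1 x, f2 x, f3 x] :: real^3) has_derivative (\<lambda>h. vector [f1' h, f2' h, f3' h])) F"
  unfolding vector3_axis using assms by (auto intro!: derivative_eq_intros)

lemma has_derivative_nth[derivative_intros]: "((\<lambda>x. x $ i) has_derivative (\<lambda>h. h $ i)) F"
  using bounded_linear_vec_nth by (rule bounded_linear_imp_has_derivative)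

lemma has_derivative_nth_eq: "f' = (\<lambda>h. h $ i) \<Longrightarrow> ((\<lambda>x. x $ i) has_derivative f') F"
  using has_derivative_nth by simp

definition pd :: "real^3 \<Rightarrow> real^3 \<Rightarrow> real^3" where
  "pd x h = vector [- sin (x$2) * h$2,
                    cos (x$2) * cos (x$3) * h$2 - sin (x$2) * sin (x$3) * h$3,
                    cos (x$2) * sin (x$3) * h$2 + sin (x$2) * cos (x$3) * h$3]"

lemma Pt_deriv: "((\<lambda>x. Pt (x$2) (x$3)) has_derivative pd x) (at x within S)"
  unfolding Pt_def pd_def
  by (rule has_derivative_vector3; (rule derivative_eq_intros has_derivative_nth_eq refl)+; auto simp: algebra_simps)

lemma det3_cols:
  fixes A :: "real^3^3"
  assumes "\<And>i. A$i$1 = u * p$i" "\<And>i. A$i$2 = ka * p$i + c * q$i" "\<And>i. A$i$3 = kb * p$i + c * w$i"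
  shows "det A = u * c^2 * (p$1 * (q$2 * w$3 - q$3 * w$2) - p$2 * (q$1 * w$3 - q$3 * w$1) + p$3 * (q$1 * w$2 - q$2 * w$1))"
  unfolding det_3 assms by algebra




lemma cbox_real: "cbox (a::real) b = {a..b}" by (rule cbox_interval)

lemma prod_3: "prod f (UNIV::3 set) = f 1 * f 2 * f 3"
  unfolding UNIV_3 by (simp add: ac_simps)

lemma content_cart3:
  fixes p q :: "real^3"
  shows "Henstock_Kurzweil_Integration.content (cbox p q) = Henstock_Kurzweil_Integration.content (cbox (p$3) (q$3)) * (Henstock_Kurzweil_Integration.content (cbox (p$2) (q$2)) * Henstock_Kurzweil_Integration.content (cbox (p$1) (q$1)))"
proof (cases "cbox p q = {}")
  case True
  then obtain i where "q$i < p$i" using interval_ne_empty_cart(1)[of p q] by (auto simp: not_le)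
  then have "q$1 < p$1 \<or> q$2 < p$2 \<or> q$3 < p$3" using exhaust_3[of i] by auto
  then have "Henstock_Kurzweil_Integration.content (cbox (p$3) (q$3)) * (Henstock_Kurzweil_Integration.content (cbox (p$2) (q$2)) * Henstock_Kurzweil_Integration.content (cbox (p$1) (q$1))) = 0"
    unfolding cbox_real content_real_if by auto
  then show ?thesis using True by simp
next
  case False
  then have "\<forall>i. p$i \<le> q$i" using interval_ne_empty_cart(1) by blast
  then show ?thesis using False by (simp add: content_cbox_cart prod_3 cbox_real)
qed

lemma integral_cart3:
  fixes F :: "real^3 \<Rightarrow> real"
  assumes cont: "continuous_on (cbox u v) F"
  shows "integral (cbox u v) F =
    integral {u$3..v$3} (\<lambda>z. integral {u$2..v$2} (\<lambda>y. integral {u$1..v$1} (\<lambda>x. F (vector [x,y,z]))))"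
proof -
  define g :: "real^3 \<Rightarrow> real \<times> real \<times> real" where "g x = (x$3, x$2, x$1)" for x
  define h :: "real \<times> real \<times> real \<Rightarrow> real^3" where "h w = vector [snd (snd w), fst (snd w), fst w]" for w
  define f where "f w = F (h w)" for w
  have hg: "h (g x) = x" for x by (simp add: g_def h_def vec_eq_iff forall_3)
  have gh: "g (h y) = y" for y by (cases y) (auto simp: g_def h_def)
  have memh: "h y \<in> cbox p q \<longleftrightarrow> y \<in> cbox (g p) (g q)" for y p q
    by (cases y) (auto simp: h_def g_def mem_box_cart forall_3 cbox_Pair_iff cbox_real)
  have gbox: "g ` cbox p q = cbox (g p) (g q)" for p q
  proof (intro set_eqI iffI)
    fix y assume "y \<in> g ` cbox p q"
    then obtain x where "x \<in> cbox p q" "y = g x" by blast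
    then show "y \<in> cbox (g p) (g q)" using memh[of "g x"] hg by simp
  next
    fix y assume "y \<in> cbox (g p) (g q)"
    then have "h y \<in> cbox p q" using memh by blast
    then show "y \<in> g ` cbox p q" using gh by (metis image_eqI)
  qed
  have hbox: "h ` cbox p q = cbox (h p) (h q)" for p q
  proof (intro set_eqI iffI)
    fix y assume "y \<in> h ` cbox p q"
    then obtain x where "x \<in> cbox p q" "y = h x" by blast
    then show "y \<in> cbox (h p) (h q)" using memh[of x "h p" "h q"] gh by simp
  next
    fix y assume "y \<in> cbox (h p) (h q)"
    then have "g y \<in> cbox p q" using memh[of "g y" "h p" "h q"] gh hg by simp
    then show "y \<in> h ` cbox p q" using hg by (metis image_eqI)
  qed
  have contg: "continuous (at x) g" for x
    unfolding g_def by (intro continuous_intros)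
  have conth: "continuous_on UNIV h"
    unfolding h_def vector3_axis by (intro continuous_intros)
  have cnt: "Henstock_Kurzweil_Integration.content (g ` cbox p q) = 1 * Henstock_Kurzweil_Integration.content (cbox p q)" for p q
    unfolding gbox by (simp add: content_Pair g_def content_cart3[of p q])
  have gu: "cbox (g u) (g v) = cbox (u$3, u$2, u$1) (v$3, v$2, v$1)" by (simp add: g_def)
  have fcont: "continuous_on (cbox (g u) (g v)) f"
    unfolding f_def
    by (rule continuous_on_compose2[OF cont continuous_on_subset[OF conth]]) (auto simp: memh)
  have fint: "(f has_integral integral (cbox (g u) (g v)) f) (cbox (g u) (g v))"
    using fcont by (simp add: integrable_continuous integrable_integral)
  have "((\<lambda>x. f (g x)) has_integral (1 / 1) *\<^sub>R integral (cbox (g u) (g v)) f) (h ` cbox (g u) (g v))"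
  proof (rule has_integral_twiddle[where r=1 and h=h and g=g])
    show "\<exists>w z. g ` cbox p q = cbox w z" for p q using gbox by blast
    show "\<exists>w z. h ` cbox p q = cbox w z" for p q using hbox by blast
  qed (use hg gh contg cnt fint in auto)
  then have "((\<lambda>x. f (g x)) has_integral integral (cbox (g u) (g v)) f) (cbox u v)"
    using hbox hg by simp
  then have 1: "integral (cbox u v) F = integral (cbox (g u) (g v)) f"
    by (simp add: f_def hg integral_unique)
  also have "\<dots> = integral (cbox (u$3) (v$3)) (\<lambda>z. integral (cbox (u$2, u$1) (v$2, v$1)) (\<lambda>w. f (z, w)))"
    unfolding gu by (rule integral_prod_continuous) (use fcont gu in simp)
  also have "\<dots> = integral {u$3..v$3} (\<lambda>z. integral {u$2..v$2} (\<lambda>y. integral {u$1..v$1} (\<lambda>x. F (vector [x,y,z]))))"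
    unfolding cbox_real
  proof (rule integral_cong)
    fix z assume z: "z \<in> {u$3..v$3}"
    have "continuous_on (cbox (u$2, u$1) (v$2, v$1)) (\<lambda>w. f (z, w))"
      by (rule continuous_on_compose2[OF fcont, of _ "\<lambda>w. (z,w)"])
         (use z in \<open>auto intro!: continuous_intros simp: gu cbox_Pair_iff cbox_real\<close>)
    then have "integral (cbox (u$2, u$1) (v$2, v$1)) (\<lambda>w. f (z, w)) =
       integral (cbox (u$2) (v$2)) (\<lambda>y. integral (cbox (u$1) (v$1)) (\<lambda>x. f (z, y, x)))"
      by (rule integral_prod_continuous)
    then show "integral (cbox (u$2, u$1) (v$2, v$1)) (\<lambda>w. f (z, w)) =
       integral {u$2..v$2} (\<lambda>y. integral {u$1..v$1} (\<lambda>x. F (vector [x,y,z])))"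
      by (simp add: f_def h_def cbox_real)
  qed
  finally show ?thesis .
qed





lemma Pt_comp[simp]: "Pt a b $ 1 = cos a" "Pt a b $ 2 = sin a * cos b" "Pt a b $ 3 = sin a * sin b"
  by (simp_all add: Pt_def)

lemma norm_Pt: "norm (Pt a b) = 1"
proof -
  have "(norm (Pt a b))^2 = Pt a b \<bullet> Pt a b" by (rule power2_norm_eq_inner)
  also have "\<dots> = cos a * cos a + (sin a * cos b) * (sin a * cos b) + (sin a * sin b) * (sin a * sin b)"
    by (simp add: inner_vec_def sum_3)
  also have "\<dots> = 1"
    using sin_cos_squared_add[of a] sin_cos_squared_add[of b] by algebra
  finally have "(norm (Pt a b))^2 = 1^2" by simp
  then show ?thesis using power2_eq_iff_nonneg[of "norm (Pt a b)" 1] by simp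
qed

lemma Pt_ne: "Pt a b \<noteq> 0" using norm_Pt[of a b] by auto

lemma cont_Pt: "continuous_on UNIV (\<lambda>x::real^3. Pt (x$2) (x$3))"
  unfolding Pt_def vector3_axis by (intro continuous_intros)

lemma pd_axis:
  "pd x (axis 1 1) = 0"
  "pd x (axis 2 1) = vector [- sin (x$2), cos (x$2) * cos (x$3), cos (x$2) * sin (x$3)]"
  "pd x (axis 3 1) = vector [0, - sin (x$2) * sin (x$3), sin (x$2) * cos (x$3)]"
  by (simp_all add: pd_def vec_eq_iff forall_3 axis_def)

locale sph =
  fixes G :: "real^3 \<Rightarrow> real"
  assumes Gdiff: "\<And>u. u \<noteq> 0 \<Longrightarrow> G differentiable (at u)"
    and Gcont: "continuous_on (-{0}) G"
    and Gpos: "\<And>u. u \<noteq> 0 \<Longrightarrow> 0 < G u"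
begin

definition DG where "DG u = frechet_derivative G (at u)"

lemma DG: "u \<noteq> 0 \<Longrightarrow> (G has_derivative DG u) (at u)"
  unfolding DG_def using Gdiff frechet_derivative_works by blast

lemma DG_lin: "u \<noteq> 0 \<Longrightarrow> linear (DG u)"
  using DG has_derivative_linear by blast

definition sg :: "real^3 \<Rightarrow> real^3" where
  "sg x = (x$1 / G (Pt (x$2) (x$3))) *\<^sub>R Pt (x$2) (x$3)"

definition sg' :: "real^3 \<Rightarrow> real^3 \<Rightarrow> real^3" where
  "sg' x h = ((h$1 * G (Pt (x$2) (x$3)) - x$1 * DG (Pt (x$2) (x$3)) (pd x h)) / (G (Pt (x$2) (x$3)))^2)
      *\<^sub>R Pt (x$2) (x$3) + (x$1 / G (Pt (x$2) (x$3))) *\<^sub>R pd x h"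

lemma Gp_pos: "0 < G (Pt a b)" using Gpos[OF Pt_ne] .

lemma Gp_deriv: "((\<lambda>x. G (Pt (x$2) (x$3))) has_derivative (\<lambda>h. DG (Pt (x$2) (x$3)) (pd x h))) (at x within S)"
  using has_derivative_compose[OF Pt_deriv DG[OF Pt_ne]] .

lemma sg_deriv: "(sg has_derivative sg' x) (at x within S)"
proof -
  let ?G = "G (Pt (x$2) (x$3))"
  have Gx: "?G \<noteq> 0" using Gp_pos by (metis less_irrefl)
  have D: "((\<lambda>x. x$1 / G (Pt (x$2) (x$3))) has_derivative
     (\<lambda>h. - x$1 * (inverse ?G * DG (Pt (x$2) (x$3)) (pd x h) * inverse ?G) + h$1 / ?G)) (at x within S)"
    by (rule has_derivative_divide[OF has_derivative_nth Gp_deriv Gx])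
  have eq: "- x$1 * (inverse ?G * d * inverse ?G) + h1 / ?G = (h1 * ?G - x$1 * d) / ?G^2" for d h1
    using Gx by (simp add: field_simps power2_eq_square)
  show ?thesis unfolding sg_def
    by (rule has_derivative_eq_rhs[OF has_derivative_scaleR[OF D Pt_deriv]])
       (use Gx in \<open>auto simp: fun_eq_iff sg'_def field_simps power2_eq_square\<close>)
qed

lemma sg'_cols:
  "sg' x (axis 1 1) = (1 / G (Pt (x$2) (x$3))) *\<^sub>R Pt (x$2) (x$3)"
  "sg' x (axis 2 1) = (- x$1 * DG (Pt (x$2) (x$3)) (pd x (axis 2 1)) / (G (Pt (x$2) (x$3)))^2) *\<^sub>R Pt (x$2) (x$3)
      + (x$1 / G (Pt (x$2) (x$3))) *\<^sub>R pd x (axis 2 1)"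
  "sg' x (axis 3 1) = (- x$1 * DG (Pt (x$2) (x$3)) (pd x (axis 3 1)) / (G (Pt (x$2) (x$3)))^2) *\<^sub>R Pt (x$2) (x$3)
      + (x$1 / G (Pt (x$2) (x$3))) *\<^sub>R pd x (axis 3 1)"
proof -
  let ?G = "G (Pt (x$2) (x$3))"
  have Gx: "?G \<noteq> 0" using Gp_pos by (metis less_irrefl)
  have "DG (Pt (x$2) (x$3)) 0 = 0" using linear_0[OF DG_lin[OF Pt_ne]] .
  then show "sg' x (axis 1 1) = (1 / ?G) *\<^sub>R Pt (x$2) (x$3)"
    using Gx by (simp add: sg'_def pd_axis power2_eq_square)
  show "sg' x (axis 2 1) = (- x$1 * DG (Pt (x$2) (x$3)) (pd x (axis 2 1)) / ?G^2) *\<^sub>R Pt (x$2) (x$3)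
      + (x$1 / ?G) *\<^sub>R pd x (axis 2 1)"
    by (simp add: sg'_def axis_def)
  show "sg' x (axis 3 1) = (- x$1 * DG (Pt (x$2) (x$3)) (pd x (axis 3 1)) / ?G^2) *\<^sub>R Pt (x$2) (x$3)
      + (x$1 / ?G) *\<^sub>R pd x (axis 3 1)"
    by (simp add: sg'_def axis_def)
qed

lemma det_sg': "det (matrix (sg' x)) = (x$1)^2 * sin (x$2) / (G (Pt (x$2) (x$3)))^3"
proof -
  let ?G = "G (Pt (x$2) (x$3))"
  have Gx: "?G \<noteq> 0" using Gp_pos by (metis less_irrefl)
  let ?p = "Pt (x$2) (x$3)" and ?q = "pd x (axis 2 1)" and ?w = "pd x (axis 3 1)"
  have "det (matrix (sg' x)) = (1 / ?G) * (x$1 / ?G)^2 *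
     (?p$1 * (?q$2 * ?w$3 - ?q$3 * ?w$2) - ?p$2 * (?q$1 * ?w$3 - ?q$3 * ?w$1) + ?p$3 * (?q$1 * ?w$2 - ?q$2 * ?w$1))"
    by (rule det3_cols[where ka="- x$1 * DG ?p ?q / ?G^2" and kb="- x$1 * DG ?p ?w / ?G^2"])
       (simp_all add: matrix_def sg'_cols)
  also have "(?p$1 * (?q$2 * ?w$3 - ?q$3 * ?w$2) - ?p$2 * (?q$1 * ?w$3 - ?q$3 * ?w$1) + ?p$3 * (?q$1 * ?w$2 - ?q$2 * ?w$1))
     = sin (x$2)"
    by (simp add: pd_axis) (use sin_cos_squared_add[of "x$2"] sin_cos_squared_add[of "x$3"] in algebra)
  finally show ?thesis using Gx by (simp add: field_simps power2_eq_square power3_eq_cube)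
qed


lemma sg_norm: "x$1 > 0 \<Longrightarrow> norm (sg x) = x$1 / G (Pt (x$2) (x$3))"
  using Gp_pos[of "x$2" "x$3"] by (simp add: sg_def norm_Pt)

lemma sg_inj: "inj_on sg {x. 0 < x$1 \<and> 0 < x$2 \<and> x$2 < pi \<and> 0 < x$3 \<and> x$3 < pi}"
proof (rule inj_onI)
  fix x y assume x: "x \<in> {x. 0 < x$1 \<and> 0 < x$2 \<and> x$2 < pi \<and> 0 < x$3 \<and> x$3 < pi}"
    and y: "y \<in> {x. 0 < x$1 \<and> 0 < x$2 \<and> x$2 < pi \<and> 0 < x$3 \<and> x$3 < pi}" and e: "sg x = sg y"
  have n: "x$1 / G (Pt (x$2) (x$3)) = y$1 / G (Pt (y$2) (y$3))"
    using sg_norm[of x] sg_norm[of y] e x y by simp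
  have pos: "x$1 / G (Pt (x$2) (x$3)) > 0" using x Gp_pos[of "x$2" "x$3"] by simp
  have P: "Pt (x$2) (x$3) = Pt (y$2) (y$3)" using e n pos y Gp_pos[of "y$2" "y$3"] unfolding sg_def by force
  have c2: "cos (x$2) = cos (y$2)" using arg_cong[OF P, of "\<lambda>v. v$1"] by simp
  have a: "x$2 = y$2" using cos_inj_pi[OF _ _ _ _ c2] x y by auto
  have s: "sin (x$2) > 0" using x sin_gt_zero by auto
  have "cos (x$3) = cos (y$3)" using arg_cong[OF P, of "\<lambda>v. v$2"] a s by simp
  then have b: "x$3 = y$3" using cos_inj_pi x y by auto
  have "x$1 = y$1" using n a b Gp_pos[of "x$2" "x$3"] by (simp add: divide_cancel_right)
  then show "x = y" using a b by (simp add: vec_eq_iff forall_3)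
qed

definition FF :: "real^3 \<Rightarrow> real" where "FF x = (x$1)^2 * sin (x$2) / (G (Pt (x$2) (x$3)))^3"

lemma Gp_cont: "continuous_on UNIV (\<lambda>x::real^3. G (Pt (x$2) (x$3)))"
  by (rule continuous_on_compose2[OF Gcont cont_Pt]) (auto simp: Pt_ne)

lemma FF_cont: "continuous_on UNIV FF"
  unfolding FF_def using Gp_pos
  by (intro continuous_intros Gp_cont) (simp add: Gp_pos[THEN less_imp_neq, THEN not_sym])

lemma int_sq: "((\<lambda>s::real. s^2) has_integral 1/3) {0..1}"
proof -
  have "((\<lambda>s. s^2) has_integral ((\<lambda>s::real. s^3/3) 1 - (\<lambda>s. s^3/3) 0)) {0..1::real}"
    by (rule fundamental_theorem_of_calculus)
       (auto intro!: derivative_eq_intros simp: has_real_derivative_iff_has_vector_derivative[symmetric])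
  then show ?thesis by simp
qed

lemma sph_measure:
  assumes ab: "0 \<le> a" "a < b" "b \<le> pi"
  shows "sg ` box (vector [0,0,a]) (vector [1,pi,b]) \<in> lmeasurable \<and>
     measure lebesgue (sg ` box (vector [0,0,a]) (vector [1,pi,b])) =
       integral {a..b} (\<lambda>z. integral {0..pi} (\<lambda>y. sin y / (G (Pt y z))^3)) / 3"
proof -
  define lo where "lo = (vector [0,0,a] :: real^3)"
  define hi where "hi = (vector [1,pi,b] :: real^3)"
  let ?S = "box lo hi"
  have memS: "x \<in> ?S \<longleftrightarrow> 0 < x$1 \<and> x$1 < 1 \<and> 0 < x$2 \<and> x$2 < pi \<and> a < x$3 \<and> x$3 < b" for x
    by (simp add: lo_def hi_def mem_box_cart forall_3)
  have meas: "?S \<in> sets lebesgue" by (simp add: fmeasurableD)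
  have inj: "inj_on sg ?S" by (rule inj_on_subset[OF sg_inj]) (use ab in \<open>auto simp: memS\<close>)
  have det: "\<bar>det (matrix (sg' x))\<bar> = FF x" if "x \<in> ?S" for x
  proof -
    have "sin (x$2) > 0" using that by (auto simp: memS intro: sin_gt_zero)
    then have "FF x \<ge> 0" unfolding FF_def using Gp_pos[of "x$2" "x$3"] by simp
    then show ?thesis unfolding det_sg'[of x] FF_def[symmetric] by (rule abs_of_nonneg)
  qed
  have "(FF has_integral integral (cbox lo hi) FF) (cbox lo hi)"
    by (intro integrable_integral integrable_continuous continuous_on_subset[OF FF_cont]) auto
  then have "(FF has_integral integral (cbox lo hi) FF) ?S" by (simp add: has_integral_open_interval)
  then have "((\<lambda>x. \<bar>det (matrix (sg' x))\<bar>) has_integral integral (cbox lo hi) FF) ?S"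
    by (rule has_integral_eq[rotated]) (simp add: det)
  then have 1: "sg ` ?S \<in> lmeasurable \<and> measure lebesgue (sg ` ?S) = integral (cbox lo hi) FF"
    using has_measure_differentiable_image[OF meas sg_deriv inj] by blast
  have 2: "integral (cbox lo hi) FF = integral {a..b} (\<lambda>z. integral {0..pi} (\<lambda>y. integral {0..1} (\<lambda>x. FF (vector [x,y,z]))))"
    using integral_cart3[OF continuous_on_subset[OF FF_cont]] by (simp add: lo_def hi_def)
  have 3: "integral {0..1} (\<lambda>x. FF (vector [x,y,z])) = sin y / (G (Pt y z))^3 / 3" for y z
  proof -
    have "integral {0..1} (\<lambda>x. FF (vector [x,y,z])) = integral {0..1} (\<lambda>x. x^2 * (sin y / (G (Pt y z))^3))"
      by (simp add: FF_def)
    also have "\<dots> = integral {0..1} (\<lambda>x::real. x^2) * (sin y / (G (Pt y z))^3)" by (rule integral_mult_left)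
    also have "integral {0..1} (\<lambda>x::real. x^2) = 1/3" using int_sq by (rule integral_unique)
    finally show ?thesis by simp
  qed
  have "sg ` ?S \<in> lmeasurable \<and> measure lebesgue (sg ` ?S) =
       integral {a..b} (\<lambda>z. integral {0..pi} (\<lambda>y. sin y / (G (Pt y z))^3)) / 3"
  proof -
    have 4: "integral {a..b} (\<lambda>z. integral {0..pi} (\<lambda>y. sin y / (G (Pt y z))^3 / 3)) =
      integral {a..b} (\<lambda>z. integral {0..pi} (\<lambda>y. sin y / (G (Pt y z))^3)) / 3"
      by (simp only: integral_divide)
    show ?thesis using 1 unfolding 2 3 4 .
  qed
  then show ?thesis by (simp add: lo_def hi_def)
qed

end



lemma vector2_axis: "(vector [a, b] :: real^2) = a *\<^sub>R axis 1 1 + b *\<^sub>R axis 2 1"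
  by (simp add: vec_eq_iff forall_2 axis_def)

lemma has_derivative_vector2:
  assumes "(f1 has_derivative f1') F" "(f2 has_derivative f2') F"
  shows "((\<lambda>x. vector [f1 x, f2 x] :: real^2) has_derivative (\<lambda>h. vector [f1' h, f2' h])) F"
  unfolding vector2_axis using assms by (auto intro!: derivative_eq_intros)

lemma prod_2: "prod f (UNIV::2 set) = f 1 * f 2"
  unfolding UNIV_2 by (simp add: ac_simps)

lemma content_cart2:
  fixes p q :: "real^2"
  shows "Henstock_Kurzweil_Integration.content (cbox p q) = Henstock_Kurzweil_Integration.content (cbox (p$2) (q$2)) * Henstock_Kurzweil_Integration.content (cbox (p$1) (q$1))"
proof (cases "cbox p q = {}")
  case True
  then obtain i where "q$i < p$i" using interval_ne_empty_cart(1)[of p q] by (auto simp: not_le)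
  then have "q$1 < p$1 \<or> q$2 < p$2" using exhaust_2[of i] by auto
  then have "Henstock_Kurzweil_Integration.content (cbox (p$2) (q$2)) * Henstock_Kurzweil_Integration.content (cbox (p$1) (q$1)) = 0"
    unfolding cbox_real content_real_if by auto
  then show ?thesis using True by simp
next
  case False
  then have "\<forall>i. p$i \<le> q$i" using interval_ne_empty_cart(1) by blast
  then show ?thesis using False by (simp add: content_cbox_cart prod_2 cbox_real)
qed

lemma integral_cart2:
  fixes F :: "real^2 \<Rightarrow> real"
  assumes cont: "continuous_on (cbox u v) F"
  shows "integral (cbox u v) F =
    integral {u$2..v$2} (\<lambda>y. integral {u$1..v$1} (\<lambda>x. F (vector [x,y])))"
proof -
  define g :: "real^2 \<Rightarrow> real \<times> real" where "g x = (x$2, x$1)" for x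
  define h :: "real \<times> real \<Rightarrow> real^2" where "h w = vector [snd w, fst w]" for w
  define f where "f w = F (h w)" for w
  have hg: "h (g x) = x" for x by (simp add: g_def h_def vec_eq_iff forall_2)
  have gh: "g (h y) = y" for y by (cases y) (auto simp: g_def h_def)
  have memh: "h y \<in> cbox p q \<longleftrightarrow> y \<in> cbox (g p) (g q)" for y p q
    by (cases y) (auto simp: h_def g_def mem_box_cart forall_2 cbox_Pair_iff cbox_real)
  have gbox: "g ` cbox p q = cbox (g p) (g q)" for p q
  proof (intro set_eqI iffI)
    fix y assume "y \<in> g ` cbox p q"
    then obtain x where "x \<in> cbox p q" "y = g x" by blast
    then show "y \<in> cbox (g p) (g q)" using memh[of "g x"] hg by simp
  next
    fix y assume "y \<in> cbox (g p) (g q)"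
    then have "h y \<in> cbox p q" using memh by blast
    then show "y \<in> g ` cbox p q" using gh by (metis image_eqI)
  qed
  have hbox: "h ` cbox p q = cbox (h p) (h q)" for p q
  proof (intro set_eqI iffI)
    fix y assume "y \<in> h ` cbox p q"
    then obtain x where "x \<in> cbox p q" "y = h x" by blast
    then show "y \<in> cbox (h p) (h q)" using memh[of x "h p" "h q"] gh by simp
  next
    fix y assume "y \<in> cbox (h p) (h q)"
    then have "g y \<in> cbox p q" using memh[of "g y" "h p" "h q"] gh hg by simp
    then show "y \<in> h ` cbox p q" using hg by (metis image_eqI)
  qed
  have contg: "continuous (at x) g" for x
    unfolding g_def by (intro continuous_intros)
  have conth: "continuous_on UNIV h"
    unfolding h_def vector2_axis by (intro continuous_intros)
  have cnt: "Henstock_Kurzweil_Integration.content (g ` cbox p q) = 1 * Henstock_Kurzweil_Integration.content (cbox p q)" for p q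
    unfolding gbox by (simp add: content_Pair g_def content_cart2[of p q])
  have gu: "cbox (g u) (g v) = cbox (u$2, u$1) (v$2, v$1)" by (simp add: g_def)
  have fcont: "continuous_on (cbox (g u) (g v)) f"
    unfolding f_def
    by (rule continuous_on_compose2[OF cont continuous_on_subset[OF conth]]) (auto simp: memh)
  have fint: "(f has_integral integral (cbox (g u) (g v)) f) (cbox (g u) (g v))"
    using fcont by (simp add: integrable_continuous integrable_integral)
  have "((\<lambda>x. f (g x)) has_integral (1 / 1) *\<^sub>R integral (cbox (g u) (g v)) f) (h ` cbox (g u) (g v))"
  proof (rule has_integral_twiddle[where r=1 and h=h and g=g])
    show "\<exists>w z. g ` cbox p q = cbox w z" for p q using gbox by blast
    show "\<exists>w z. h ` cbox p q = cbox w z" for p q using hbox by blast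
  qed (use hg gh contg cnt fint in auto)
  then have "((\<lambda>x. f (g x)) has_integral integral (cbox (g u) (g v)) f) (cbox u v)"
    using hbox hg by simp
  then have 1: "integral (cbox u v) F = integral (cbox (g u) (g v)) f"
    by (simp add: f_def hg integral_unique)
  also have "\<dots> = integral (cbox (u$2) (v$2)) (\<lambda>y. integral (cbox (u$1) (v$1)) (\<lambda>x. f (y, x)))"
    unfolding gu by (rule integral_prod_continuous) (use fcont gu in simp)
  also have "\<dots> = integral {u$2..v$2} (\<lambda>y. integral {u$1..v$1} (\<lambda>x. F (vector [x,y])))"
    by (simp add: f_def h_def cbox_real)
  finally show ?thesis .
qed

definition pd2 :: "real^2 \<Rightarrow> real^2 \<Rightarrow> real^2" where
  "pd2 x h = vector [- sin (x$2) * h$2, cos (x$2) * h$2]"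

definition E2 :: "real \<Rightarrow> real^2" where "E2 a = vector [cos a, sin a]"

lemma E2_comp[simp]: "E2 a $ 1 = cos a" "E2 a $ 2 = sin a" by (simp_all add: E2_def)

lemma E2_deriv: "((\<lambda>x. E2 (x$2)) has_derivative pd2 x) (at x within S)"
  unfolding E2_def pd2_def
  by (rule has_derivative_vector2; (rule derivative_eq_intros has_derivative_nth_eq refl)+; auto simp: algebra_simps)

lemma norm_E2: "norm (E2 a) = 1"
proof -
  have "(norm (E2 a))^2 = E2 a \<bullet> E2 a" by (rule power2_norm_eq_inner)
  also have "\<dots> = cos a * cos a + sin a * sin a" by (simp add: inner_vec_def sum_2)
  also have "\<dots> = 1" using sin_cos_squared_add[of a] by algebra
  finally have "(norm (E2 a))^2 = 1^2" by simp
  then show ?thesis using power2_eq_iff_nonneg[of "norm (E2 a)" 1] by simp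
qed

lemma E2_ne: "E2 a \<noteq> 0" using norm_E2[of a] by auto

lemma cont_E2: "continuous_on UNIV (\<lambda>x::real^2. E2 (x$2))"
  unfolding E2_def vector2_axis by (intro continuous_intros)

lemma pd2_axis:
  "pd2 x (axis 1 1) = 0"
  "pd2 x (axis 2 1) = vector [- sin (x$2), cos (x$2)]"
  by (simp_all add: pd2_def vec_eq_iff forall_2 axis_def)

lemma det2_cols:
  fixes A :: "real^2^2"
  assumes "\<And>i. A$i$1 = u * p$i" "\<And>i. A$i$2 = ka * p$i + c * q$i"
  shows "det A = u * c * (p$1 * q$2 - p$2 * q$1)"
  unfolding det_2 assms by algebra

locale pol =
  fixes G :: "real^2 \<Rightarrow> real"
  assumes Gdiff: "\<And>u. u \<noteq> 0 \<Longrightarrow> G differentiable (at u)"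
    and Gcont: "continuous_on (-{0}) G"
    and Gpos: "\<And>u. u \<noteq> 0 \<Longrightarrow> 0 < G u"
begin

definition DG where "DG u = frechet_derivative G (at u)"

lemma DG: "u \<noteq> 0 \<Longrightarrow> (G has_derivative DG u) (at u)"
  unfolding DG_def using Gdiff frechet_derivative_works by blast

lemma DG_lin: "u \<noteq> 0 \<Longrightarrow> linear (DG u)"
  using DG has_derivative_linear by blast

definition pg :: "real^2 \<Rightarrow> real^2" where
  "pg x = (x$1 / G (E2 (x$2))) *\<^sub>R E2 (x$2)"

definition pg' :: "real^2 \<Rightarrow> real^2 \<Rightarrow> real^2" where
  "pg' x h = ((h$1 * G (E2 (x$2)) - x$1 * DG (E2 (x$2)) (pd2 x h)) / (G (E2 (x$2)))^2)
      *\<^sub>R E2 (x$2) + (x$1 / G (E2 (x$2))) *\<^sub>R pd2 x h"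

lemma Gp_pos: "0 < G (E2 a)" using Gpos[OF E2_ne] .

lemma Gp_deriv: "((\<lambda>x. G (E2 (x$2))) has_derivative (\<lambda>h. DG (E2 (x$2)) (pd2 x h))) (at x within S)"
  using has_derivative_compose[OF E2_deriv DG[OF E2_ne]] .

lemma pg_deriv: "(pg has_derivative pg' x) (at x within S)"
proof -
  let ?G = "G (E2 (x$2))"
  have Gx: "?G \<noteq> 0" using Gp_pos by (metis less_irrefl)
  have D: "((\<lambda>x. x$1 / G (E2 (x$2))) has_derivative
     (\<lambda>h. - x$1 * (inverse ?G * DG (E2 (x$2)) (pd2 x h) * inverse ?G) + h$1 / ?G)) (at x within S)"
    by (rule has_derivative_divide[OF has_derivative_nth Gp_deriv Gx])
  show ?thesis unfolding pg_def
    by (rule has_derivative_eq_rhs[OF has_derivative_scaleR[OF D E2_deriv]])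
       (use Gx in \<open>auto simp: fun_eq_iff pg'_def field_simps power2_eq_square\<close>)
qed

lemma det_pg': "det (matrix (pg' x)) = x$1 / (G (E2 (x$2)))^2"
proof -
  let ?G = "G (E2 (x$2))"
  have Gx: "?G \<noteq> 0" using Gp_pos by (metis less_irrefl)
  let ?p = "E2 (x$2)" and ?q = "pd2 x (axis 2 1)"
  have c1: "pg' x (axis 1 1) = (1 / ?G) *\<^sub>R ?p"
  proof -
    have "DG ?p 0 = 0" using linear_0[OF DG_lin[OF E2_ne]] .
    then show ?thesis using Gx by (simp add: pg'_def pd2_axis power2_eq_square)
  qed
  have c2: "pg' x (axis 2 1) = (- x$1 * DG ?p ?q / ?G^2) *\<^sub>R ?p + (x$1 / ?G) *\<^sub>R ?q"
    by (simp add: pg'_def axis_def)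
  have "det (matrix (pg' x)) = (1 / ?G) * (x$1 / ?G) * (?p$1 * ?q$2 - ?p$2 * ?q$1)"
    by (rule det2_cols[where ka="- x$1 * DG ?p ?q / ?G^2"]) (simp_all add: matrix_def c1 c2)
  also have "?p$1 * ?q$2 - ?p$2 * ?q$1 = 1"
    by (simp add: pd2_axis)
  finally show ?thesis using Gx by (simp add: field_simps power2_eq_square)
qed

lemma pg_norm: "x$1 > 0 \<Longrightarrow> norm (pg x) = x$1 / G (E2 (x$2))"
  using Gp_pos[of "x$2"] by (simp add: pg_def norm_E2)

lemma pg_inj: "inj_on pg {x. 0 < x$1 \<and> 0 < x$2 \<and> x$2 < pi}"
proof (rule inj_onI)
  fix x y assume x: "x \<in> {x. 0 < x$1 \<and> 0 < x$2 \<and> x$2 < pi}"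
    and y: "y \<in> {x. 0 < x$1 \<and> 0 < x$2 \<and> x$2 < pi}" and e: "pg x = pg y"
  have n: "x$1 / G (E2 (x$2)) = y$1 / G (E2 (y$2))"
    using pg_norm[of x] pg_norm[of y] e x y by simp
  have pos: "x$1 / G (E2 (x$2)) > 0" using x Gp_pos[of "x$2"] by simp
  have P: "E2 (x$2) = E2 (y$2)" using e n pos y Gp_pos[of "y$2"] unfolding pg_def by force
  have c2: "cos (x$2) = cos (y$2)" using arg_cong[OF P, of "\<lambda>v. v$1"] by simp
  have a: "x$2 = y$2" using cos_inj_pi[OF _ _ _ _ c2] x y by auto
  have "x$1 = y$1" using n a Gp_pos[of "x$2"] by (simp add: divide_cancel_right)
  then show "x = y" using a by (simp add: vec_eq_iff forall_2)
qed

definition FF :: "real^2 \<Rightarrow> real" where "FF x = x$1 / (G (E2 (x$2)))^2"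

lemma Gp_cont: "continuous_on UNIV (\<lambda>x::real^2. G (E2 (x$2)))"
  by (rule continuous_on_compose2[OF Gcont cont_E2]) (auto simp: E2_ne)

lemma FF_cont: "continuous_on UNIV FF"
  unfolding FF_def
  by (intro continuous_intros Gp_cont) (simp add: Gp_pos[THEN less_imp_neq, THEN not_sym])

lemma int_lin: "((\<lambda>s::real. s) has_integral 1/2) {0..1}"
proof -
  have "((\<lambda>s. s) has_integral ((\<lambda>s::real. s^2/2) 1 - (\<lambda>s. s^2/2) 0)) {0..1::real}"
    by (rule fundamental_theorem_of_calculus)
       (auto intro!: derivative_eq_intros simp: has_real_derivative_iff_has_vector_derivative[symmetric])
  then show ?thesis by simp
qed

lemma pol_measure:
  assumes ab: "0 \<le> a" "a < b" "b \<le> pi"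
  shows "pg ` box (vector [0,a]) (vector [1,b]) \<in> lmeasurable \<and>
     measure lebesgue (pg ` box (vector [0,a]) (vector [1,b])) =
       integral {a..b} (\<lambda>y. 1 / (G (E2 y))^2) / 2"
proof -
  define lo where "lo = (vector [0,a] :: real^2)"
  define hi where "hi = (vector [1,b] :: real^2)"
  let ?S = "box lo hi"
  have memS: "x \<in> ?S \<longleftrightarrow> 0 < x$1 \<and> x$1 < 1 \<and> a < x$2 \<and> x$2 < b" for x
    by (simp add: lo_def hi_def mem_box_cart forall_2)
  have meas: "?S \<in> sets lebesgue" by (simp add: fmeasurableD)
  have inj: "inj_on pg ?S" by (rule inj_on_subset[OF pg_inj]) (use ab in \<open>auto simp: memS\<close>)
  have det: "\<bar>det (matrix (pg' x))\<bar> = FF x" if "x \<in> ?S" for x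
  proof -
    have "FF x \<ge> 0" unfolding FF_def using that by (simp add: memS)
    then show ?thesis unfolding det_pg'[of x] FF_def[symmetric] by (rule abs_of_nonneg)
  qed
  have "(FF has_integral integral (cbox lo hi) FF) (cbox lo hi)"
    by (intro integrable_integral integrable_continuous continuous_on_subset[OF FF_cont]) auto
  then have "(FF has_integral integral (cbox lo hi) FF) ?S" by (simp add: has_integral_open_interval)
  then have "((\<lambda>x. \<bar>det (matrix (pg' x))\<bar>) has_integral integral (cbox lo hi) FF) ?S"
    by (rule has_integral_eq[rotated]) (simp add: det)
  then have 1: "pg ` ?S \<in> lmeasurable \<and> measure lebesgue (pg ` ?S) = integral (cbox lo hi) FF"
    using has_measure_differentiable_image[OF meas pg_deriv inj] by blast
  have 2: "integral (cbox lo hi) FF = integral {a..b} (\<lambda>y. integral {0..1} (\<lambda>x. FF (vector [x,y])))"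
    using integral_cart2[OF continuous_on_subset[OF FF_cont]] by (simp add: lo_def hi_def)
  have 3: "integral {0..1} (\<lambda>x. FF (vector [x,y])) = 1 / (G (E2 y))^2 / 2" for y
  proof -
    have "integral {0..1} (\<lambda>x. FF (vector [x,y])) = integral {0..1} (\<lambda>x. x * (1 / (G (E2 y))^2))"
      by (simp add: FF_def)
    also have "\<dots> = integral {0..1} (\<lambda>x::real. x) * (1 / (G (E2 y))^2)" by (rule integral_mult_left)
    also have "integral {0..1} (\<lambda>x::real. x) = 1/2" using int_lin by (rule integral_unique)
    finally show ?thesis by simp
  qed
  have "pg ` ?S \<in> lmeasurable \<and> measure lebesgue (pg ` ?S) =
       integral {a..b} (\<lambda>y. 1 / (G (E2 y))^2) / 2"
  proof -
    have 4: "integral {a..b} (\<lambda>y. 1 / (G (E2 y))^2 / 2) = integral {a..b} (\<lambda>y. 1 / (G (E2 y))^2) / 2"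
      by (simp only: integral_divide)
    show ?thesis using 1 unfolding 2 3 4 .
  qed
  then show ?thesis by (simp add: lo_def hi_def)
qed

end




lemma sin_pos_angle:
  assumes "0 < t" "t < pi" "0 < b" "b < pi" "sin (t - b) > 0" shows "b < t"
proof (rule ccontr)
  assume "\<not> b < t" then have "0 \<le> b - t" "b - t \<le> pi" using assms by auto
  then have "sin (b - t) \<ge> 0" by (rule sin_ge_zero)
  moreover have "sin (t - b) = - sin (b - t)" by (metis minus_diff_eq sin_minus)
  ultimately show False using assms by simp
qed

lemma sin_neg_angle:
  assumes "0 < t" "t < pi" "0 < b" "b < pi" "sin (t - b) < 0" shows "t < b"
proof (rule ccontr)
  assume "\<not> t < b" then have "0 \<le> t - b" "t - b \<le> pi" using assms by auto
  then have "sin (t - b) \<ge> 0" by (rule sin_ge_zero)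
  then show False using assms by simp
qed

lemma inner_vector3: "(vector [a, b, c] :: real^3) \<bullet> p = a * p$1 + b * p$2 + c * p$3"
  by (simp add: inner_vec_def sum_3)

lemma neg_plane3: "(a, b, c) \<noteq> (0,0,0) \<Longrightarrow> negligible {p::real^3. a * p$1 + b * p$2 + c * p$3 = 0}"
  using negligible_hyperplane[of "vector [a, b, c] :: real^3" 0]
  by (auto simp: inner_vector3 vec_eq_iff forall_3)

lemma cot_rel:
  assumes "0 < sin (t::real)" shows "sin t * (y - cot t * z) = y * sin t - z * cos t"
proof -
  have "sin t \<noteq> 0" using assms by simp
  then show ?thesis by (simp add: cot_def field_simps)
qed

lemma norm3_sq: "(norm (p::real^3))^2 = (p$1)^2 + (p$2)^2 + (p$3)^2"
proof -
  have "(norm p)^2 = p \<bullet> p" by (rule power2_norm_eq_inner)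
  then show ?thesis by (simp add: inner_vec_def sum_3 power2_eq_square)
qed

lemma pos_factor: "0 < c \<Longrightarrow> 0 < c * s \<Longrightarrow> 0 < (s::real)" by (simp add: zero_less_mult_iff)
lemma neg_factor: "0 < c \<Longrightarrow> c * s < 0 \<Longrightarrow> s < (0::real)" by (simp add: mult_less_0_iff)

locale kb = cbody K r for K :: "(real^3) set" and r +
  assumes sym: "\<And>x. x \<in> K \<Longrightarrow> -x \<in> K"
    and Kdiff: "\<And>u. u \<noteq> 0 \<Longrightarrow> gg K differentiable (at u)"
    and Kcont: "continuous_on (-{0}) (gg K)"
begin

sublocale S: sph "gg K"
  by unfold_locales (auto intro: Kdiff Kcont gg_char(1))

lemma frontierK: "p \<in> K \<Longrightarrow> p \<notin> frontier K \<Longrightarrow> p \<in> interior K"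
  using compact_imp_closed[OF cpt] by (simp add: frontier_def closure_closed)

lemma sg_props:
  assumes "0 < x$1" "x$1 < 1"
  shows "gg K (S.sg x) = x$1" "S.sg x \<in> K" "S.sg x \<noteq> 0"
    "S.sg x $ 2 = (x$1 / gg K (Pt (x$2) (x$3))) * sin (x$2) * cos (x$3)"
    "S.sg x $ 3 = (x$1 / gg K (Pt (x$2) (x$3))) * sin (x$2) * sin (x$3)"
proof -
  let ?G = "gg K (Pt (x$2) (x$3))"
  have G: "?G > 0" by (rule S.Gp_pos)
  have c: "x$1 / ?G > 0" using assms G by simp
  show g: "gg K (S.sg x) = x$1" unfolding S.sg_def using gg_hom[OF Pt_ne c] G by simp
  show ne: "S.sg x \<noteq> 0" unfolding S.sg_def using c Pt_ne assms G by simp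
  show "S.sg x \<in> K" using gg_mem[OF ne] g assms by simp
  show "S.sg x $ 2 = (x$1 / ?G) * sin (x$2) * cos (x$3)" by (simp add: S.sg_def)
  show "S.sg x $ 3 = (x$1 / ?G) * sin (x$2) * sin (x$3)" by (simp add: S.sg_def)
qed

lemma sg_inv:
  assumes p: "p \<in> interior K" "p$3 > 0"
  obtains x where "0 < x$1" "x$1 < 1" "0 < x$2" "x$2 < pi" "0 < x$3" "x$3 < pi" "S.sg x = p"
proof -
  have p0: "p \<noteq> 0" using p by auto
  define t where "t = norm p"
  have t: "t > 0" using p0 by (simp add: t_def)
  define u where "u = p /\<^sub>R t"
  have pu: "p = t *\<^sub>R u" using t by (simp add: u_def)
  have u0: "u \<noteq> 0" using p0 pu by auto
  have "norm u = 1" using t by (simp add: u_def t_def)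
  then have nu: "(u$1)^2 + (u$2)^2 + (u$3)^2 = 1" using norm3_sq[of u] by simp
  have u3: "u$3 > 0" using p t by (simp add: u_def)
  define s where "s = sqrt ((u$2)^2 + (u$3)^2)"
  have s: "s > 0" using u3 by (simp add: s_def add_nonneg_pos)
  have s2: "s^2 = (u$2)^2 + (u$3)^2" by (simp add: s_def)
  obtain a where a: "0 \<le> a" "a \<le> pi" "u$1 = cos a" "s = sin a"
    using sincos_total_pi[of s "u$1"] s nu s2 by auto
  have a': "0 < a" "a < pi" using a s by (auto intro: order.not_eq_order_implies_strict)
  have "(u$2 / s)^2 + (u$3 / s)^2 = ((u$2)^2 + (u$3)^2) / s^2" by (simp add: power_divide add_divide_distrib)
  also have "\<dots> = 1" using s s2 u3 by simp
  finally have "(u$2 / s)^2 + (u$3 / s)^2 = 1" .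
  then obtain b where b: "0 \<le> b" "b \<le> pi" "u$2 / s = cos b" "u$3 / s = sin b"
    using sincos_total_pi[of "u$3 / s" "u$2 / s"] s u3 by auto
  have "sin b > 0" using b(4) s u3 by (metis divide_pos_pos)
  then have b': "0 < b" "b < pi" using b by (auto intro: order.not_eq_order_implies_strict)
  have Pu: "Pt a b = u"
    using a b s by (simp add: vec_eq_iff forall_3 field_simps)
  define x where "x = (vector [gg K p, a, b] :: real^3)"
  have g: "gg K p = t * gg K u" unfolding pu by (rule gg_hom[OF u0 t])
  have gp: "gg K p < 1" by (rule gg_interior[OF p(1) p0])
  have gp0: "gg K p > 0" by (rule gg_char(1)[OF p0])
  have gu: "gg K u > 0" by (rule gg_char(1)[OF u0])
  have "S.sg x = p" unfolding S.sg_def x_def using Pu g gu pu by simp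
  then show thesis using that[of x] gp gp0 a' b' by (simp add: x_def)
qed

lemma vol_w:
  assumes th: "0 < \<theta>" "\<theta> < pi"
  shows "measure lebesgue (K \<inter> {p. p$3 \<ge> 0 \<and> p$2 - cot \<theta> * p$3 \<ge> 0}) =
           integral {0..\<theta>} (\<lambda>z. integral {0..pi} (\<lambda>y. sin y / (gg K (Pt y z))^3)) / 3"
    and "measure lebesgue (K \<inter> {p. p$3 \<ge> 0 \<and> p$2 - cot \<theta> * p$3 \<le> 0}) =
           integral {\<theta>..pi} (\<lambda>z. integral {0..pi} (\<lambda>y. sin y / (gg K (Pt y z))^3)) / 3"
proof -
  have st: "sin \<theta> > 0" using th by (simp add: sin_gt_zero)
  define N where "N = frontier K \<union> {p::real^3. 0 * p$1 + 0 * p$2 + 1 * p$3 = 0}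
     \<union> {p. 0 * p$1 + sin \<theta> * p$2 + (- cos \<theta>) * p$3 = 0}"
  have negN: "negligible N" unfolding N_def
    using negligible_convex_frontier[OF cvx] neg_plane3[of 0 0 1] neg_plane3[of 0 "sin \<theta>" "- cos \<theta>"] st
    by (intro negligible_Un) auto
  have key: "sin \<theta> * (S.sg x $ 2 - cot \<theta> * S.sg x $ 3) =
      (x$1 / gg K (Pt (x$2) (x$3))) * sin (x$2) * sin (\<theta> - x$3)" if "0 < x$1" "x$1 < 1" for x
  proof -
    have "gg K (Pt (x$2) (x$3)) \<noteq> 0" using S.Gp_pos[of "x$2" "x$3"] by simp
    then show ?thesis unfolding cot_rel[OF st] sg_props[OF that] by (simp add: sin_diff field_simps)
  qed
  have pos: "x$1 / gg K (Pt (x$2) (x$3)) * sin (x$2) > 0" if "0 < x$1" "0 < x$2" "x$2 < pi" for x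
    using that S.Gp_pos[of "x$2" "x$3"] by (simp add: sin_gt_zero)
  have memb: "(x::real^3) \<in> box (vector [0,0,l]) (vector [1,pi,h]) \<longleftrightarrow> 0 < x$1 \<and> x$1 < 1 \<and> 0 < x$2 \<and> x$2 < pi \<and> l < x$3 \<and> x$3 < h"
    for x l h by (simp add: mem_box_cart forall_3)
  let ?B1 = "box (vector [0,0,0]) (vector [1,pi,\<theta>]) :: (real^3) set"
  let ?W1 = "K \<inter> {p. p$3 \<ge> 0 \<and> p$2 - cot \<theta> * p$3 \<ge> 0}"
  have m1: "S.sg ` ?B1 \<in> lmeasurable \<and> measure lebesgue (S.sg ` ?B1) =
      integral {0..\<theta>} (\<lambda>z. integral {0..pi} (\<lambda>y. sin y / (gg K (Pt y z))^3)) / 3"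
    using S.sph_measure[of 0 \<theta>] th by simp
  have s1: "S.sg ` ?B1 \<subseteq> ?W1"
  proof
    fix p assume "p \<in> S.sg ` ?B1"
    then obtain x where x: "x \<in> ?B1" "p = S.sg x" by blast
    have xs: "0 < x$1" "x$1 < 1" "0 < x$2" "x$2 < pi" "0 < x$3" "x$3 < \<theta>" using x(1) by (auto simp: memb)
    have sx3: "sin (x$3) > 0" using xs th by (intro sin_gt_zero) auto
    have e3: "p$3 = (x$1 / gg K (Pt (x$2) (x$3)) * sin (x$2)) * sin (x$3)"
      using x(2) sg_props(5)[OF xs(1,2)] by simp
    have p3: "p$3 > 0" unfolding e3 using pos[OF xs(1,3,4)] sx3 by (rule mult_pos_pos)
    have sd: "sin (\<theta> - x$3) > 0" using xs th by (intro sin_gt_zero) auto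
    have e2: "sin \<theta> * (p$2 - cot \<theta> * p$3) = (x$1 / gg K (Pt (x$2) (x$3)) * sin (x$2)) * sin (\<theta> - x$3)"
      using key[OF xs(1,2)] x(2) by simp
    have "sin \<theta> * (p$2 - cot \<theta> * p$3) > 0" unfolding e2 using pos[OF xs(1,3,4)] sd by (rule mult_pos_pos)
    then have "p$2 - cot \<theta> * p$3 > 0" using st by (simp add: zero_less_mult_iff)
    with p3 show "p \<in> ?W1" using sg_props(2)[OF xs(1,2)] x(2) by simp
  qed
  have s1': "?W1 - S.sg ` ?B1 \<subseteq> N"
  proof
    fix p assume p: "p \<in> ?W1 - S.sg ` ?B1"
    show "p \<in> N"
    proof (rule ccontr)
      assume "p \<notin> N"
      then have nf: "p \<notin> frontier K" and n3: "p$3 \<noteq> 0" and n2: "sin \<theta> * p$2 - cos \<theta> * p$3 \<noteq> 0"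
        by (auto simp: N_def algebra_simps)
      have pi: "p \<in> interior K" using p nf frontierK by blast
      have p3: "p$3 > 0" using p n3 by auto
      have "sin \<theta> * (p$2 - cot \<theta> * p$3) \<noteq> 0" unfolding cot_rel[OF st] using n2 by (simp add: mult.commute)
      then have "p$2 - cot \<theta> * p$3 \<noteq> 0" by auto
      then have p2: "p$2 - cot \<theta> * p$3 > 0" using p by auto
      obtain x where xs: "0 < x$1" "x$1 < 1" "0 < x$2" "x$2 < pi" "0 < x$3" "x$3 < pi" "S.sg x = p"
        using sg_inv[OF pi p3] by blast
      have "sin \<theta> * (p$2 - cot \<theta> * p$3) > 0" using p2 st by simp
      moreover have "sin \<theta> * (p$2 - cot \<theta> * p$3) = (x$1 / gg K (Pt (x$2) (x$3)) * sin (x$2)) * sin (\<theta> - x$3)"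
        using key[OF xs(1,2)] xs(7) by simp
      ultimately have "sin (\<theta> - x$3) > 0" using pos_factor[OF pos[OF xs(1,3,4)]] by metis
      then have "x$3 < \<theta>" using sin_pos_angle th xs by blast
      then have "x \<in> ?B1" using xs by (simp add: memb)
      then show False using p xs(7) by blast
    qed
  qed
  show "measure lebesgue ?W1 = integral {0..\<theta>} (\<lambda>z. integral {0..pi} (\<lambda>y. sin y / (gg K (Pt y z))^3)) / 3"
  proof -
    have "S.sg ` ?B1 - ?W1 \<union> (?W1 - S.sg ` ?B1) \<subseteq> N" using s1 s1' by blast
    then have "negligible (S.sg ` ?B1 - ?W1 \<union> (?W1 - S.sg ` ?B1))"
      using negN negligible_subset by blast
    then have "measure lebesgue ?W1 = measure lebesgue (S.sg ` ?B1)"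
      using m1 by (intro measure_negligible_symdiff) auto
    then show ?thesis using m1 by simp
  qed
  let ?B2 = "box (vector [0,0,\<theta>]) (vector [1,pi,pi]) :: (real^3) set"
  let ?W2 = "K \<inter> {p. p$3 \<ge> 0 \<and> p$2 - cot \<theta> * p$3 \<le> 0}"
  have m2: "S.sg ` ?B2 \<in> lmeasurable \<and> measure lebesgue (S.sg ` ?B2) =
      integral {\<theta>..pi} (\<lambda>z. integral {0..pi} (\<lambda>y. sin y / (gg K (Pt y z))^3)) / 3"
    using S.sph_measure[of \<theta> pi] th by simp
  have s2: "S.sg ` ?B2 \<subseteq> ?W2"
  proof
    fix p assume "p \<in> S.sg ` ?B2"
    then obtain x where x: "x \<in> ?B2" "p = S.sg x" by blast
    have xs: "0 < x$1" "x$1 < 1" "0 < x$2" "x$2 < pi" "\<theta> < x$3" "x$3 < pi" using x(1) by (auto simp: memb)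
    have sx3: "sin (x$3) > 0" using xs th by (intro sin_gt_zero) auto
    have e3: "p$3 = (x$1 / gg K (Pt (x$2) (x$3)) * sin (x$2)) * sin (x$3)"
      using x(2) sg_props(5)[OF xs(1,2)] by simp
    have p3: "p$3 > 0" unfolding e3 using pos[OF xs(1,3,4)] sx3 by (rule mult_pos_pos)
    have "sin (x$3 - \<theta>) > 0" using xs th by (intro sin_gt_zero) auto
    then have sd: "sin (\<theta> - x$3) < 0" by (metis minus_diff_eq neg_less_0_iff_less sin_minus)
    have e2: "sin \<theta> * (p$2 - cot \<theta> * p$3) = (x$1 / gg K (Pt (x$2) (x$3)) * sin (x$2)) * sin (\<theta> - x$3)"
      using key[OF xs(1,2)] x(2) by simp
    have "sin \<theta> * (p$2 - cot \<theta> * p$3) < 0" unfolding e2 using pos[OF xs(1,3,4)] sd by (rule mult_pos_neg)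
    then have "p$2 - cot \<theta> * p$3 < 0" using st by (simp add: mult_less_0_iff)
    with p3 show "p \<in> ?W2" using sg_props(2)[OF xs(1,2)] x(2) by simp
  qed
  have s2': "?W2 - S.sg ` ?B2 \<subseteq> N"
  proof
    fix p assume p: "p \<in> ?W2 - S.sg ` ?B2"
    show "p \<in> N"
    proof (rule ccontr)
      assume "p \<notin> N"
      then have nf: "p \<notin> frontier K" and n3: "p$3 \<noteq> 0" and n2: "sin \<theta> * p$2 - cos \<theta> * p$3 \<noteq> 0"
        by (auto simp: N_def algebra_simps)
      have pi: "p \<in> interior K" using p nf frontierK by blast
      have p3: "p$3 > 0" using p n3 by auto
      have "sin \<theta> * (p$2 - cot \<theta> * p$3) \<noteq> 0" unfolding cot_rel[OF st] using n2 by (simp add: mult.commute)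
      then have "p$2 - cot \<theta> * p$3 \<noteq> 0" by auto
      then have p2: "p$2 - cot \<theta> * p$3 < 0" using p by auto
      obtain x where xs: "0 < x$1" "x$1 < 1" "0 < x$2" "x$2 < pi" "0 < x$3" "x$3 < pi" "S.sg x = p"
        using sg_inv[OF pi p3] by blast
      have "sin \<theta> * (p$2 - cot \<theta> * p$3) < 0" using p2 st by (simp add: mult_pos_neg)
      moreover have "sin \<theta> * (p$2 - cot \<theta> * p$3) = (x$1 / gg K (Pt (x$2) (x$3)) * sin (x$2)) * sin (\<theta> - x$3)"
        using key[OF xs(1,2)] xs(7) by simp
      ultimately have "sin (\<theta> - x$3) < 0" using neg_factor[OF pos[OF xs(1,3,4)]] by metis
      then have "\<theta> < x$3" using sin_neg_angle th xs by blast
      then have "x \<in> ?B2" using xs by (simp add: memb)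
      then show False using p xs(7) by blast
    qed
  qed
  show "measure lebesgue ?W2 = integral {\<theta>..pi} (\<lambda>z. integral {0..pi} (\<lambda>y. sin y / (gg K (Pt y z))^3)) / 3"
  proof -
    have "S.sg ` ?B2 - ?W2 \<union> (?W2 - S.sg ` ?B2) \<subseteq> N" using s2 s2' by blast
    then have "negligible (S.sg ` ?B2 - ?W2 \<union> (?W2 - S.sg ` ?B2))"
      using negN negligible_subset by blast
    then have "measure lebesgue ?W2 = measure lebesgue (S.sg ` ?B2)"
      using m2 by (intro measure_negligible_symdiff) auto
    then show ?thesis using m2 by simp
  qed
qed

end




definition emb :: "real \<Rightarrow> real^2 \<Rightarrow> real^3" where
  "emb b u = vector [u$1, u$2 * cos b, u$2 * sin b]"

lemma emb_E2: "emb b (E2 a) = Pt a b"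
  by (simp add: emb_def Pt_def)

lemma emb_lin: "linear (emb b)"
  by (rule linearI) (simp_all add: emb_def vec_eq_iff forall_3 algebra_simps)

lemma norm2_sq: "(norm (p::real^2))^2 = (p$1)^2 + (p$2)^2"
proof -
  have "(norm p)^2 = p \<bullet> p" by (rule power2_norm_eq_inner)
  then show ?thesis by (simp add: inner_vec_def sum_2 power2_eq_square)
qed

lemma emb_norm: "norm (emb b u) = norm u"
proof -
  have e: "(u$2 * cos b)^2 + (u$2 * sin b)^2 = (u$2)^2" using sin_cos_squared_add2[of b] by algebra
  have "(norm (emb b u))^2 = (u$1)^2 + (u$2 * cos b)^2 + (u$2 * sin b)^2"
    unfolding norm3_sq by (simp add: emb_def)
  then have "(norm (emb b u))^2 = (norm u)^2" unfolding norm2_sq using e by linarith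
  then show ?thesis using power2_eq_iff_nonneg[of "norm (emb b u)" "norm u"] by simp
qed

lemma emb_0: "emb b u = 0 \<longleftrightarrow> u = 0"
  using emb_norm[of b u] by (metis norm_eq_zero)

lemma neg_plane2: "(a, c) \<noteq> (0,0) \<Longrightarrow> negligible {p::real^2. a * p$1 + c * p$2 = 0}"
  using negligible_hyperplane[of "vector [a, c] :: real^2" 0]
  by (auto simp: inner_vec_def sum_2 vec_eq_iff forall_2)

lemma cbody_emb:
  assumes "cbody K r"
  shows "cbody {u. emb b u \<in> K} r"
proof -
  interpret cbody K r by fact
  have eq: "{u. emb b u \<in> K} = emb b -` K" by auto
  have cl: "closed {u. emb b u \<in> K}" unfolding eq
    using compact_imp_closed[OF cpt] linear_continuous_at[OF emb_lin[unfolded linear_conv_bounded_linear]]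
    by (intro continuous_closed_vimage) auto
  obtain B where B: "B > 0" "\<And>c. c \<in> K \<Longrightarrow> norm c \<le> B" using bnd by blast
  have "bounded {u. emb b u \<in> K}" unfolding bounded_iff using B(2) emb_norm by fastforce
  show ?thesis
  proof
    show "compact {u. emb b u \<in> K}" using cl \<open>bounded _\<close> by (simp add: compact_eq_bounded_closed)
    show "convex {u. emb b u \<in> K}" unfolding eq by (rule convex_linear_vimage[OF emb_lin cvx])
    show "0 < r" by (rule rpos)
    show "ball 0 r \<subseteq> {u. emb b u \<in> K}" using ballC emb_norm by (auto simp: subset_iff)
  qed
qed

lemma gg_emb:
  shows "gg {u. emb b u \<in> K} u = gg K (emb b u)"
proof -
  have "{t. t > 0 \<and> u \<in> (\<lambda>p. t *\<^sub>R p) ` {u. emb b u \<in> K}} = {t. t > 0 \<and> emb b u \<in> (\<lambda>p. t *\<^sub>R p) ` K}"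
  proof (intro Collect_cong conj_cong refl)
    fix t :: real assume "t > 0"
    then show "u \<in> (\<lambda>p. t *\<^sub>R p) ` {u. emb b u \<in> K} \<longleftrightarrow> emb b u \<in> (\<lambda>p. t *\<^sub>R p) ` K"
      by (simp add: mem_scale_iff linear_cmul[OF emb_lin])
  qed
  then show ?thesis by (simp add: gg_def)
qed

context kb
begin

lemma pol_K2: "pol (gg {u. emb b u \<in> K})"
proof -
  interpret C2: cbody "{u. emb b u \<in> K}" r by (rule cbody_emb) unfold_locales
  have eq: "gg {u. emb b u \<in> K} = gg K \<circ> emb b" by (simp add: fun_eq_iff gg_emb)
  show ?thesis
  proof
    fix u :: "real^2" assume u: "u \<noteq> 0"
    then have "emb b u \<noteq> 0" by (simp add: emb_0)
    then show "gg {u. emb b u \<in> K} differentiable at u"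
      unfolding eq by (intro differentiable_chain_at linear_imp_differentiable emb_lin Kdiff)
    show "0 < gg {u. emb b u \<in> K} u" by (rule C2.gg_char(1)[OF u])
  next
    have c1: "continuous_on (-{0}) (emb b)"
      using linear_continuous_on[OF emb_lin[unfolded linear_conv_bounded_linear]] continuous_on_subset by blast
    have "emb b ` (-{0}) \<subseteq> -{0}" by (auto simp: emb_0)
    then show "continuous_on (- {0}) (gg {u. emb b u \<in> K})"
      unfolding eq by (rule continuous_on_compose[OF c1 continuous_on_subset[OF Kcont]])
  qed
qed


lemma area_w:
  assumes ph: "0 < \<phi>" "\<phi> < pi"
  shows "measure lebesgue {u. emb b u \<in> K \<and> u$2 \<ge> 0 \<and> u$1 - cot \<phi> * u$2 \<ge> 0} =
           integral {0..\<phi>} (\<lambda>a. 1 / (gg K (Pt a b))^2) / 2"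
    and "measure lebesgue {u. emb b u \<in> K \<and> u$2 \<ge> 0 \<and> u$1 - cot \<phi> * u$2 \<le> 0} =
           integral {\<phi>..pi} (\<lambda>a. 1 / (gg K (Pt a b))^2) / 2"
proof -
  define K2 where "K2 = {u. emb b u \<in> K}"
  interpret C2: cbody K2 r unfolding K2_def by (rule cbody_emb) unfold_locales
  interpret P: pol "gg K2" unfolding K2_def by (rule pol_K2)
  have GE: "gg K2 (E2 a) = gg K (Pt a b)" for a unfolding K2_def gg_emb emb_E2 ..
  have memK2: "u \<in> K2 \<longleftrightarrow> emb b u \<in> K" for u by (simp add: K2_def)
  have st: "sin \<phi> > 0" using ph by (simp add: sin_gt_zero)
  have frontierK2: "u \<in> interior K2" if "u \<in> K2" "u \<notin> frontier K2" for u
    using that compact_imp_closed[OF C2.cpt] by (simp add: frontier_def closure_closed)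
  have pgp: "gg K2 (P.pg x) = x$1" "P.pg x \<in> K2"
    "P.pg x $ 1 = (x$1 / gg K2 (E2 (x$2))) * cos (x$2)"
    "P.pg x $ 2 = (x$1 / gg K2 (E2 (x$2))) * sin (x$2)" if xs: "0 < x$1" "x$1 < 1" for x
  proof -
    let ?G = "gg K2 (E2 (x$2))"
    have G: "?G > 0" by (rule P.Gp_pos)
    have c: "x$1 / ?G > 0" using xs G by simp
    show g: "gg K2 (P.pg x) = x$1" unfolding P.pg_def using C2.gg_hom[OF E2_ne c] G by simp
    have ne: "P.pg x \<noteq> 0" unfolding P.pg_def using c E2_ne xs G by simp
    show "P.pg x \<in> K2" using C2.gg_mem[OF ne] g xs by simp
    show "P.pg x $ 1 = (x$1 / ?G) * cos (x$2)" by (simp add: P.pg_def)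
    show "P.pg x $ 2 = (x$1 / ?G) * sin (x$2)" by (simp add: P.pg_def)
  qed
  have pg_inv: "\<exists>x. 0 < x$1 \<and> x$1 < 1 \<and> 0 < x$2 \<and> x$2 < pi \<and> P.pg x = u"
    if up: "u \<in> interior K2" "u$2 > 0" for u
  proof -
    have u0: "u \<noteq> 0" using up by auto
    define t where "t = norm u"
    have t: "t > 0" using u0 by (simp add: t_def)
    define v where "v = u /\<^sub>R t"
    have uv: "u = t *\<^sub>R v" using t by (simp add: v_def)
    have v0: "v \<noteq> 0" using u0 uv by auto
    have "norm v = 1" using t by (simp add: v_def t_def)
    then have nv: "(v$1)^2 + (v$2)^2 = 1" using norm2_sq[of v] by simp
    have v2: "v$2 > 0" using up t by (simp add: v_def)
    obtain a where a: "0 \<le> a" "a \<le> pi" "v$1 = cos a" "v$2 = sin a"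
      using sincos_total_pi[of "v$2" "v$1"] nv v2 by auto
    have a': "0 < a" "a < pi" using a v2 by (auto intro: order.not_eq_order_implies_strict)
    have Ev: "E2 a = v" using a by (simp add: vec_eq_iff forall_2)
    define x where "x = (vector [gg K2 u, a] :: real^2)"
    have g: "gg K2 u = t * gg K2 v" unfolding uv by (rule C2.gg_hom[OF v0 t])
    have gp: "gg K2 u < 1" by (rule C2.gg_interior[OF up(1) u0])
    have gp0: "gg K2 u > 0" by (rule C2.gg_char(1)[OF u0])
    have gv: "gg K2 v > 0" by (rule C2.gg_char(1)[OF v0])
    have "P.pg x = u" unfolding P.pg_def x_def using Ev g gv uv by simp
    then have "0 < x$1 \<and> x$1 < 1 \<and> 0 < x$2 \<and> x$2 < pi \<and> P.pg x = u" using gp gp0 a' by (simp add: x_def)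
    then show ?thesis by blast
  qed
  have key: "sin \<phi> * (P.pg x $ 1 - cot \<phi> * P.pg x $ 2) =
      (x$1 / gg K2 (E2 (x$2))) * sin (\<phi> - x$2)" if "0 < x$1" "x$1 < 1" for x
  proof -
    have "gg K2 (E2 (x$2)) \<noteq> 0" using P.Gp_pos[of "x$2"] by simp
    then show ?thesis unfolding cot_rel[OF st] pgp(3,4)[OF that] by (simp add: sin_diff field_simps)
  qed
  have pos: "x$1 / gg K2 (E2 (x$2)) > 0" if "0 < x$1" for x
    using that P.Gp_pos[of "x$2"] by simp
  define N where "N = frontier K2 \<union> {u::real^2. 0 * u$1 + 1 * u$2 = 0}
     \<union> {u. sin \<phi> * u$1 + (- cos \<phi>) * u$2 = 0}"
  have negN: "negligible N" unfolding N_def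
    using negligible_convex_frontier[OF C2.cvx] neg_plane2[of 0 1] neg_plane2[of "sin \<phi>" "- cos \<phi>"] st
    by (intro negligible_Un) auto
  have memb: "(x::real^2) \<in> box (vector [0,l]) (vector [1,h]) \<longleftrightarrow> 0 < x$1 \<and> x$1 < 1 \<and> l < x$2 \<and> x$2 < h"
    for x l h by (simp add: mem_box_cart forall_2)
  have intGE: "integral {l..h} (\<lambda>y. 1 / (gg K2 (E2 y))^2) / 2 = integral {l..h} (\<lambda>a. 1 / (gg K (Pt a b))^2) / 2"
    for l h by (simp only: GE)
  let ?B1 = "box (vector [0,0]) (vector [1,\<phi>]) :: (real^2) set"
  let ?W1 = "{u. emb b u \<in> K \<and> u$2 \<ge> 0 \<and> u$1 - cot \<phi> * u$2 \<ge> 0}"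
  have m1: "P.pg ` ?B1 \<in> lmeasurable \<and> measure lebesgue (P.pg ` ?B1) =
      integral {0..\<phi>} (\<lambda>a. 1 / (gg K (Pt a b))^2) / 2"
    using P.pol_measure[of 0 \<phi>] ph unfolding intGE by simp
  have s1: "P.pg ` ?B1 \<subseteq> ?W1"
  proof
    fix p assume "p \<in> P.pg ` ?B1"
    then obtain x where x: "x \<in> ?B1" "p = P.pg x" by blast
    have xs: "0 < x$1" "x$1 < 1" "0 < x$2" "x$2 < \<phi>" using x(1) by (auto simp: memb)
    have sx2: "sin (x$2) > 0" using xs ph by (intro sin_gt_zero) auto
    have e3: "p$2 = (x$1 / gg K2 (E2 (x$2))) * sin (x$2)"
      using x(2) pgp(4)[OF xs(1,2)] by simp
    have p3: "p$2 > 0" unfolding e3 using pos[OF xs(1)] sx2 by (rule mult_pos_pos)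
    have sd: "sin (\<phi> - x$2) > 0" using xs ph by (intro sin_gt_zero) auto
    have e2: "sin \<phi> * (p$1 - cot \<phi> * p$2) = (x$1 / gg K2 (E2 (x$2))) * sin (\<phi> - x$2)"
      using key[OF xs(1,2)] x(2) by simp
    have "sin \<phi> * (p$1 - cot \<phi> * p$2) > 0" unfolding e2 using pos[OF xs(1)] sd by (rule mult_pos_pos)
    then have "p$1 - cot \<phi> * p$2 > 0" using st by (simp add: zero_less_mult_iff)
    with p3 show "p \<in> ?W1" using pgp(2)[OF xs(1,2)] x(2) by (simp add: memK2)
  qed
  have s1': "?W1 - P.pg ` ?B1 \<subseteq> N"
  proof
    fix p assume p: "p \<in> ?W1 - P.pg ` ?B1"
    show "p \<in> N"
    proof (rule ccontr)
      assume "p \<notin> N"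
      then have nf: "p \<notin> frontier K2" and n3: "p$2 \<noteq> 0" and n2: "sin \<phi> * p$1 - cos \<phi> * p$2 \<noteq> 0"
        by (auto simp: N_def algebra_simps)
      have pi: "p \<in> interior K2" using p nf frontierK2 by (auto simp: memK2)
      have p3: "p$2 > 0" using p n3 by auto
      have "sin \<phi> * (p$1 - cot \<phi> * p$2) \<noteq> 0" unfolding cot_rel[OF st] using n2 by (simp add: mult.commute)
      then have "p$1 - cot \<phi> * p$2 \<noteq> 0" by auto
      then have p2: "p$1 - cot \<phi> * p$2 > 0" using p by auto
      obtain x where xs: "0 < x$1" "x$1 < 1" "0 < x$2" "x$2 < pi" "P.pg x = p"
        using pg_inv[OF pi p3] by blast
      have "sin \<phi> * (p$1 - cot \<phi> * p$2) > 0" using p2 st by simp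
      moreover have "sin \<phi> * (p$1 - cot \<phi> * p$2) = (x$1 / gg K2 (E2 (x$2))) * sin (\<phi> - x$2)"
        using key[OF xs(1,2)] xs(5) by simp
      ultimately have "sin (\<phi> - x$2) > 0" using pos_factor[OF pos[OF xs(1)]] by metis
      then have "x$2 < \<phi>" using sin_pos_angle ph xs by blast
      then have "x \<in> ?B1" using xs by (simp add: memb)
      then show False using p xs(5) by blast
    qed
  qed
  show "measure lebesgue ?W1 = integral {0..\<phi>} (\<lambda>a. 1 / (gg K (Pt a b))^2) / 2"
  proof -
    have "P.pg ` ?B1 - ?W1 \<union> (?W1 - P.pg ` ?B1) \<subseteq> N" using s1 s1' by blast
    then have "negligible (P.pg ` ?B1 - ?W1 \<union> (?W1 - P.pg ` ?B1))"
      using negN negligible_subset by blast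
    then have "measure lebesgue ?W1 = measure lebesgue (P.pg ` ?B1)"
      using m1 by (intro measure_negligible_symdiff) auto
    then show ?thesis using m1 by simp
  qed
  let ?B2 = "box (vector [0,\<phi>]) (vector [1,pi]) :: (real^2) set"
  let ?W2 = "{u. emb b u \<in> K \<and> u$2 \<ge> 0 \<and> u$1 - cot \<phi> * u$2 \<le> 0}"
  have m2: "P.pg ` ?B2 \<in> lmeasurable \<and> measure lebesgue (P.pg ` ?B2) =
      integral {\<phi>..pi} (\<lambda>a. 1 / (gg K (Pt a b))^2) / 2"
    using P.pol_measure[of \<phi> pi] ph unfolding intGE by simp
  have s2: "P.pg ` ?B2 \<subseteq> ?W2"
  proof
    fix p assume "p \<in> P.pg ` ?B2"
    then obtain x where x: "x \<in> ?B2" "p = P.pg x" by blast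
    have xs: "0 < x$1" "x$1 < 1" "\<phi> < x$2" "x$2 < pi" using x(1) by (auto simp: memb)
    have sx2: "sin (x$2) > 0" using xs ph by (intro sin_gt_zero) auto
    have e3: "p$2 = (x$1 / gg K2 (E2 (x$2))) * sin (x$2)"
      using x(2) pgp(4)[OF xs(1,2)] by simp
    have p3: "p$2 > 0" unfolding e3 using pos[OF xs(1)] sx2 by (rule mult_pos_pos)
    have "sin (x$2 - \<phi>) > 0" using xs ph by (intro sin_gt_zero) auto
    then have sd: "sin (\<phi> - x$2) < 0" by (metis minus_diff_eq neg_less_0_iff_less sin_minus)
    have e2: "sin \<phi> * (p$1 - cot \<phi> * p$2) = (x$1 / gg K2 (E2 (x$2))) * sin (\<phi> - x$2)"
      using key[OF xs(1,2)] x(2) by simp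
    have "sin \<phi> * (p$1 - cot \<phi> * p$2) < 0" unfolding e2 using pos[OF xs(1)] sd by (rule mult_pos_neg)
    then have "p$1 - cot \<phi> * p$2 < 0" using st by (simp add: mult_less_0_iff)
    with p3 show "p \<in> ?W2" using pgp(2)[OF xs(1,2)] x(2) by (simp add: memK2)
  qed
  have s2': "?W2 - P.pg ` ?B2 \<subseteq> N"
  proof
    fix p assume p: "p \<in> ?W2 - P.pg ` ?B2"
    show "p \<in> N"
    proof (rule ccontr)
      assume "p \<notin> N"
      then have nf: "p \<notin> frontier K2" and n3: "p$2 \<noteq> 0" and n2: "sin \<phi> * p$1 - cos \<phi> * p$2 \<noteq> 0"
        by (auto simp: N_def algebra_simps)
      have pi: "p \<in> interior K2" using p nf frontierK2 by (auto simp: memK2)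
      have p3: "p$2 > 0" using p n3 by auto
      have "sin \<phi> * (p$1 - cot \<phi> * p$2) \<noteq> 0" unfolding cot_rel[OF st] using n2 by (simp add: mult.commute)
      then have "p$1 - cot \<phi> * p$2 \<noteq> 0" by auto
      then have p2: "p$1 - cot \<phi> * p$2 < 0" using p by auto
      obtain x where xs: "0 < x$1" "x$1 < 1" "0 < x$2" "x$2 < pi" "P.pg x = p"
        using pg_inv[OF pi p3] by blast
      have "sin \<phi> * (p$1 - cot \<phi> * p$2) < 0" using p2 st by (simp add: mult_pos_neg)
      moreover have "sin \<phi> * (p$1 - cot \<phi> * p$2) = (x$1 / gg K2 (E2 (x$2))) * sin (\<phi> - x$2)"
        using key[OF xs(1,2)] xs(5) by simp
      ultimately have "sin (\<phi> - x$2) < 0" using neg_factor[OF pos[OF xs(1)]] by metis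
      then have "\<phi> < x$2" using sin_neg_angle ph xs by blast
      then have "x \<in> ?B2" using xs by (simp add: memb)
      then show False using p xs(5) by blast
    qed
  qed
  show "measure lebesgue ?W2 = integral {\<phi>..pi} (\<lambda>a. 1 / (gg K (Pt a b))^2) / 2"
  proof -
    have "P.pg ` ?B2 - ?W2 \<union> (?W2 - P.pg ` ?B2) \<subseteq> N" using s2 s2' by blast
    then have "negligible (P.pg ` ?B2 - ?W2 \<union> (?W2 - P.pg ` ?B2))"
      using negN negligible_subset by blast
    then have "measure lebesgue ?W2 = measure lebesgue (P.pg ` ?B2)"
      using m2 by (intro measure_negligible_symdiff) auto
    then show ?thesis using m2 by simp
  qed
qed

end



lemma bisect:
  fixes h :: "real \<Rightarrow> real"
  assumes cont: "continuous_on {0..pi} h" and c: "c > 0" and lb: "\<And>x. x \<in> {0..pi} \<Longrightarrow> c \<le> h x"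
  shows "\<exists>!\<theta>. 0 < \<theta> \<and> \<theta> < pi \<and> integral {0..\<theta>} h = integral {\<theta>..pi} h"
proof -
  have hint: "h integrable_on {0..pi}" using cont by (rule integrable_continuous_real)
  have hsub: "h integrable_on {a..b}" if "0 \<le> a" "b \<le> pi" for a b
  proof (cases "a \<le> b")
    case True then show ?thesis using hint that by (intro integrable_subinterval_real[OF hint]) auto
  qed (simp add: integrable_on_empty)
  define I where "I t = integral {0..t} h" for t
  have comb: "integral {t..pi} h = I pi - I t" if "0 \<le> t" "t \<le> pi" for t
    using Henstock_Kurzweil_Integration.integral_combine[OF that hint] by (simp add: I_def)
  have grow: "I s + c * (t - s) \<le> I t" if "0 \<le> s" "s \<le> t" "t \<le> pi" for s t
  proof -
    have "integral {s..t} (\<lambda>x. c) \<le> integral {s..t} h"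
      using that lb by (intro integral_le hsub) auto
    moreover have "I s + integral {s..t} h = I t"
      unfolding I_def using that by (intro Henstock_Kurzweil_Integration.integral_combine hsub) auto
    moreover have "integral {s..t} (\<lambda>x. c) = c * (t - s)" using that by simp
    ultimately show ?thesis by linarith
  qed
  have Ipi: "I pi \<ge> c * pi" using grow[of 0 pi] by (simp add: I_def)
  have Ipos: "I pi > 0" using Ipi c pi_gt_zero by (smt (verit) mult_pos_pos)
  have contI: "continuous_on {0..pi} (\<lambda>t. 2 * I t - I pi)"
    unfolding I_def by (intro continuous_intros indefinite_integral_continuous_1 hint)
  obtain t where t: "0 \<le> t" "t \<le> pi" "2 * I t - I pi = 0"
    using IVT'[of "\<lambda>t. 2 * I t - I pi" 0 0 pi] contI Ipos by (auto simp: I_def)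
  have t0: "t \<noteq> 0" using t Ipos by (auto simp: I_def)
  have tpi: "t \<noteq> pi" using t Ipos by auto
  have P: "0 < t \<and> t < pi \<and> integral {0..t} h = integral {t..pi} h"
    using t t0 tpi comb[of t] by (auto simp: I_def)
  show ?thesis
  proof (rule ex1I[of _ t])
    show "0 < t \<and> t < pi \<and> integral {0..t} h = integral {t..pi} h" by (rule P)
  next
    fix s assume s: "0 < s \<and> s < pi \<and> integral {0..s} h = integral {s..pi} h"
    then have s2: "2 * I s = I pi" using comb[of s] by (simp add: I_def)
    have t2: "2 * I t = I pi" using t by simp
    show "s = t"
    proof (rule ccontr)
      assume "s \<noteq> t"
      then have "s < t \<or> t < s" by auto
      then show False
      proof
        assume "s < t" then have "I s + c * (t - s) \<le> I t" using s t by (intro grow) auto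
        then show False using s2 t2 c \<open>s < t\<close> by (smt (verit) mult_pos_pos)
      next
        assume "t < s" then have "I t + c * (s - t) \<le> I s" using s t by (intro grow) auto
        then show False using s2 t2 c \<open>t < s\<close> by (smt (verit) mult_pos_pos)
      qed
    qed
  qed
qed

lemma int_sin: "((\<lambda>x. sin x) has_integral 2) {0..pi}"
proof -
  have "((\<lambda>x. sin x) has_integral ((\<lambda>x. - cos x) pi - (\<lambda>x. - cos x) 0)) {0..pi}"
    by (rule fundamental_theorem_of_calculus)
       (auto intro!: derivative_eq_intros simp: has_real_derivative_iff_has_vector_derivative[symmetric])
  then show ?thesis by simp
qed

lemma Khat_kb:
  assumes "K \<in> Khat"
  shows "\<exists>r. kb K r" "gauge K = gg K" "radial K = rr K"
proof -
  show gK: "gauge K = gg K" by (simp add: fun_eq_iff gauge_def gg_def)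
  show "radial K = rr K" by (simp add: fun_eq_iff radial_def rr_def)
  have cpt: "compact K" and cvx: "convex K" and int: "interior K \<noteq> {}"
    and sym: "\<And>x. x \<in> K \<Longrightarrow> -x \<in> K" and sm: "smooth_on3 (gauge K) (- {0})"
    using assms by (auto simp: Khat_def convex_body3_def centrally_symmetric_def)
  have d: "\<And>u. u \<noteq> 0 \<Longrightarrow> gg K differentiable (at u)"
    using sm unfolding smooth_on3_def gK by (metis ComplI iter_dd.simps(2) singletonD)
  have cc: "continuous_on (-{0}) (gg K)"
    using sm unfolding smooth_on3_def gK by (metis iter_dd.simps(1))
  obtain p where "p \<in> interior K" using int by blast
  then obtain e where e: "e > 0" "ball p e \<subseteq> K" by (meson mem_interior)
  have "ball 0 e \<subseteq> K"
  proof
    fix y :: "real^3" assume "y \<in> ball 0 e"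
    then have ny: "norm y < e" by simp
    have "p + y \<in> K" using e ny by (auto simp: dist_norm intro!: subsetD[OF e(2)])
    moreover have "p - y \<in> K" using e ny by (auto simp: dist_norm intro!: subsetD[OF e(2)])
    then have "y - p \<in> K" using sym[of "p - y"] by simp
    ultimately have "(1/2) *\<^sub>R (p + y) + (1 - 1/2) *\<^sub>R (y - p) \<in> K"
      by (intro convexD[OF cvx]) auto
    moreover have "(1/2) *\<^sub>R (p + y) + (1 - 1/2) *\<^sub>R (y - p) = y" by (auto simp: vec_eq_iff field_simps)
    ultimately show "y \<in> K" by simp
  qed
  then have "kb K e" using cpt cvx e(1) sym d cc by unfold_locales auto
  then show "\<exists>r. kb K r" by blast
qed

context kb
begin

lemma rr_Pt: "rr K (Pt a b) = 1 / gg K (Pt a b)" by (rule rr_gg[OF Pt_ne])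

lemma gg_Pt_le: "gg K (Pt a b) \<le> 2 / r"
proof -
  have "(r/2) *\<^sub>R Pt a b \<in> K" using ballC rpos by (auto simp: norm_Pt)
  moreover have "(r/2) *\<^sub>R Pt a b \<noteq> 0" using rpos Pt_ne by simp
  ultimately have "gg K ((r/2) *\<^sub>R Pt a b) \<le> 1" using gg_mem by blast
  then have "(r/2) * gg K (Pt a b) \<le> 1" using gg_hom[OF Pt_ne, of "r/2"] rpos by simp
  then show ?thesis using rpos by (simp add: field_simps)
qed

lemma rr_Pt_ge: "rr K (Pt a b) \<ge> r / 2"
proof -
  have "gg K (Pt a b) > 0" by (rule S.Gp_pos)
  then show ?thesis unfolding rr_Pt using gg_Pt_le[of a b] rpos by (simp add: field_simps)
qed

lemma cont_ggPt: "continuous_on UNIV (\<lambda>w::real\<times>real. 1 / gg K (Pt (fst w) (snd w)))"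
proof -
  have "continuous_on UNIV (\<lambda>w::real\<times>real. Pt (fst w) (snd w))"
    unfolding Pt_def vector3_axis by (intro continuous_intros)
  then have c: "continuous_on UNIV (\<lambda>w::real\<times>real. gg K (Pt (fst w) (snd w)))"
    by (rule continuous_on_compose2[OF Kcont]) (auto simp: Pt_ne)
  have nz: "gg K (Pt a b) \<noteq> 0" for a b using S.Gp_pos by (metis less_irrefl)
  show ?thesis
    by (rule continuous_on_divide[OF continuous_on_const c]) (use nz in blast)
qed

end




lemma radial_rr: "radial K = rr K" by (simp add: fun_eq_iff radial_def rr_def)

lemma closed_hs2: "closed {u::real^2. a * u$1 + b * u$2 \<ge> 0}"
  using closed_halfspace_ge[of 0 "vector [a,b] :: real^2"] by (simp add: inner_vec_def sum_2)

lemma closed_hs3: "closed {p::real^3. a * p$1 + b * p$2 + c * p$3 \<ge> 0}"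
  using closed_halfspace_ge[of 0 "vector [a,b,c] :: real^3"] by (simp add: inner_vec_def sum_3)

lemma meas_mat_image2:
  fixes N :: "real^2^2"
  assumes "S \<in> lmeasurable"
  shows "measure lebesgue ((\<lambda>x. N *v x) ` S) = \<bar>det N\<bar> * measure lebesgue S"
  using measure_linear_image[of "\<lambda>x. N *v x" S] assms by (simp add: matrix_vector_mul_linear)

lemma meas_mat_image3:
  fixes N :: "real^3^3"
  assumes "S \<in> lmeasurable"
  shows "measure lebesgue ((\<lambda>x. N *v x) ` S) = \<bar>det N\<bar> * measure lebesgue S"
  using measure_linear_image[of "\<lambda>x. N *v x" S] assms by (simp add: matrix_vector_mul_linear)

context kb
begin

lemma cont_ggPt2: "continuous_on UNIV (\<lambda>w::real\<times>real. 1 / gg K (Pt (snd w) (fst w)))"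
proof -
  have c: "continuous_on UNIV (\<lambda>w::real\<times>real. (snd w, fst w))" by (intro continuous_intros)
  from continuous_on_compose2[OF cont_ggPt c] show ?thesis by simp
qed

lemma cont_ggPt_a: "continuous_on UNIV (\<lambda>a. 1 / gg K (Pt a b))"
proof -
  have c: "continuous_on UNIV (\<lambda>a::real. (a, b))" by (intro continuous_intros)
  from continuous_on_compose2[OF cont_ggPt c] show ?thesis by simp
qed

lemma Theta_prop:
  "0 < Theta K \<and> Theta K < pi \<and>
   integral {0..Theta K} (\<lambda>\<beta>. integral {0..pi} (\<lambda>\<alpha>. (radial K (Pt \<alpha> \<beta>)) ^ 3 * sin \<alpha>))
   = integral {Theta K..pi} (\<lambda>\<beta>. integral {0..pi} (\<lambda>\<alpha>. (radial K (Pt \<alpha> \<beta>)) ^ 3 * sin \<alpha>))"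
proof -
  let ?h = "\<lambda>\<beta>. integral {0..pi} (\<lambda>\<alpha>. (radial K (Pt \<alpha> \<beta>)) ^ 3 * sin \<alpha>)"
  have f: "(radial K (Pt \<alpha> \<beta>)) ^ 3 * sin \<alpha> = (1 / gg K (Pt \<alpha> \<beta>)) ^ 3 * sin \<alpha>" for \<alpha> \<beta>
    by (simp add: radial_rr rr_Pt)
  have cf: "continuous_on UNIV (\<lambda>w::real\<times>real. (1 / gg K (Pt (snd w) (fst w))) ^ 3 * sin (snd w))"
    by (intro continuous_intros cont_ggPt2)
  have "continuous_on {0..pi} (\<lambda>\<beta>. integral (cbox 0 pi) (\<lambda>\<alpha>. (1 / gg K (Pt \<alpha> \<beta>)) ^ 3 * sin \<alpha>))"
    by (rule integral_continuous_on_param) (auto intro: continuous_on_subset[OF cf] simp: split_beta)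
  then have cont: "continuous_on {0..pi} ?h" unfolding f cbox_real .
  have lb: "(r/2)^3 * 2 \<le> ?h \<beta>" if "\<beta> \<in> {0..pi}" for \<beta>
  proof -
    have ci: "continuous_on {0..pi} (\<lambda>\<alpha>. (1 / gg K (Pt \<alpha> \<beta>)) ^ 3 * sin \<alpha>)"
    proof -
      have c: "continuous_on UNIV (\<lambda>a::real. (\<beta>, a))" by (intro continuous_intros)
      from continuous_on_compose2[OF cf c] have "continuous_on UNIV (\<lambda>\<alpha>. (1 / gg K (Pt \<alpha> \<beta>)) ^ 3 * sin \<alpha>)"
        by simp
      then show ?thesis by (rule continuous_on_subset) simp
    qed
    have "integral {0..pi} (\<lambda>\<alpha>. (r/2)^3 * sin \<alpha>) \<le> integral {0..pi} (\<lambda>\<alpha>. (1 / gg K (Pt \<alpha> \<beta>)) ^ 3 * sin \<alpha>)"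
    proof (rule integral_le)
      show "(\<lambda>\<alpha>. (r/2)^3 * sin \<alpha>) integrable_on {0..pi}"
        by (intro integrable_continuous_real continuous_intros)
      show "(\<lambda>\<alpha>. (1 / gg K (Pt \<alpha> \<beta>)) ^ 3 * sin \<alpha>) integrable_on {0..pi}"
        using ci by (rule integrable_continuous_real)
      fix \<alpha> assume a: "\<alpha> \<in> {0..pi}"
      have "sin \<alpha> \<ge> 0" using a by (intro sin_ge_zero) auto
      moreover have "(r/2)^3 \<le> (1 / gg K (Pt \<alpha> \<beta>)) ^ 3"
        using rr_Pt_ge[of \<alpha> \<beta>] rpos unfolding rr_Pt by (intro power_mono) auto
      ultimately show "(r/2)^3 * sin \<alpha> \<le> (1 / gg K (Pt \<alpha> \<beta>)) ^ 3 * sin \<alpha>"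
        by (rule mult_right_mono[rotated])
    qed
    moreover have "integral {0..pi} (\<lambda>\<alpha>. (r/2)^3 * sin \<alpha>) = (r/2)^3 * 2"
      using int_sin by (simp add: integral_unique)
    ultimately show ?thesis unfolding f by simp
  qed
  have "\<exists>!\<theta>. 0 < \<theta> \<and> \<theta> < pi \<and> integral {0..\<theta>} ?h = integral {\<theta>..pi} ?h"
    by (rule bisect[OF cont _ lb]) (use rpos in simp)
  then show ?thesis unfolding Theta_def by (rule theI')
qed

lemma Phi_gen:
  "\<exists>!\<phi>. 0 < \<phi> \<and> \<phi> < pi \<and>
     integral {0..\<phi>} (\<lambda>\<alpha>. (radial K (Pt \<alpha> b))\<^sup>2) = integral {\<phi>..pi} (\<lambda>\<alpha>. (radial K (Pt \<alpha> b))\<^sup>2)"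
proof -
  let ?h = "\<lambda>\<alpha>. (radial K (Pt \<alpha> b))\<^sup>2"
  have f: "?h = (\<lambda>\<alpha>. (1 / gg K (Pt \<alpha> b))\<^sup>2)" by (simp add: fun_eq_iff radial_rr rr_Pt)
  have cont: "continuous_on {0..pi} ?h" unfolding f
    by (intro continuous_intros continuous_on_subset[OF cont_ggPt_a]) auto
  have lb: "(r/2)^2 \<le> ?h a" if "a \<in> {0..pi}" for a
    unfolding radial_rr using rr_Pt_ge[of a b] rpos by (intro power_mono) auto
  show ?thesis by (rule bisect[OF cont _ lb]) (use rpos in simp)
qed

lemma Phi_prop:
  "0 < Phi K \<and> Phi K < pi \<and>
   integral {0..Phi K} (\<lambda>\<alpha>. (radial K (Pt \<alpha> 0))\<^sup>2) = integral {Phi K..pi} (\<lambda>\<alpha>. (radial K (Pt \<alpha> 0))\<^sup>2)"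
  unfolding Phi_def by (rule theI'[OF Phi_gen])

lemma Psi_prop:
  "0 < Psi K \<and> Psi K < pi \<and>
   integral {0..Psi K} (\<lambda>\<alpha>. (radial K (Pt \<alpha> (Theta K)))\<^sup>2) = integral {Psi K..pi} (\<lambda>\<alpha>. (radial K (Pt \<alpha> (Theta K)))\<^sup>2)"
  unfolding Psi_def by (rule theI'[OF Phi_gen])

end




lemma closed_orthant:
  "closed {p::real^3. 0 \<le> s1 * p$1 \<and> 0 \<le> s2 * p$2 \<and> 0 \<le> s3 * p$3}"
proof -
  have "{p::real^3. 0 \<le> s1 * p$1 \<and> 0 \<le> s2 * p$2 \<and> 0 \<le> s3 * p$3} =
    {p. s1 * p$1 + 0 * p$2 + 0 * p$3 \<ge> 0} \<inter> {p. 0 * p$1 + s2 * p$2 + 0 * p$3 \<ge> 0} \<inter> {p. 0 * p$1 + 0 * p$2 + s3 * p$3 \<ge> 0}"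
    (is "_ = ?R") by auto
  moreover have "closed ?R" by (intro closed_Int closed_hs3)
  ultimately show ?thesis by simp
qed

lemma one_over_tan: "1 / (s * tan x) * s = cot x" if "s \<noteq> 0" for s x :: real
proof (cases "tan x = 0")
  case True
  then have "sin x = 0 \<or> cos x = 0" by (simp add: tan_def)
  then show ?thesis using True by (auto simp: cot_def)
next
  case False
  then show ?thesis using that by (simp add: tan_def cot_def field_simps)
qed

lemma vec2_id[simp]: "(vector [u$1, u$2] :: real^2) = u"
  by (simp add: vec_eq_iff forall_2)

context kb
begin

lemma cbK: "cbody K r" by unfold_locales

lemma compact_embK: "compact {u. emb b u \<in> K}"
  using cbody.cpt[OF cbody_emb[OF cbK]] .

lemma main:
  assumes L: "L = (\<lambda>p. Amat K *v p) ` K"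
  shows "area_y0 (L \<inter> {p. p$2 = 0 \<and> p$1 \<ge> 0 \<and> p$3 \<ge> 0})
           = area_y0 (L \<inter> {p. p$2 = 0 \<and> p$1 \<ge> 0 \<and> p$3 \<le> 0}) \<and>
         area_z0 (L \<inter> {p. p$3 = 0 \<and> p$1 \<ge> 0 \<and> p$2 \<ge> 0})
           = area_z0 (L \<inter> {p. p$3 = 0 \<and> p$1 \<le> 0 \<and> p$2 \<ge> 0}) \<and>
         measure lebesgue (Delta1 L) + measure lebesgue (Delta2 L)
           = measure lebesgue (Delta3 L) + measure lebesgue (Delta4 L)"
proof -
  define th where "th = Theta K"
  define ph where "ph = Phi K"
  define ps where "ps = Psi K"
  define c where "c = 1 / (sin th * tan ps)"
  define M where "M = (vector [vector [1, cot ph, c], vector [0, 1, cot th], vector [0, 0, 1]] :: real^3^3)"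
  define A where "A = Amat K"
  have AM: "A = matrix_inv M" by (simp add: A_def Amat_def M_def c_def th_def ph_def ps_def)
  have ThP: "0 < th" "th < pi" using Theta_prop by (auto simp: th_def)
  have PhP: "0 < ph" "ph < pi" using Phi_prop by (auto simp: ph_def)
  have PsP: "0 < ps" "ps < pi" using Psi_prop by (auto simp: ps_def)
  have st: "sin th > 0" using ThP by (simp add: sin_gt_zero)
  have detM: "det M = 1" by (simp add: M_def det_3)
  have invM: "invertible M" using detM by (simp add: invertible_det_nz)
  have MA: "M ** A = mat 1 \<and> A ** M = mat 1"
    unfolding AM matrix_inv_def using invM unfolding invertible_def by (rule someI_ex)
  have MAv: "M *v (A *v p) = p" for p using MA by (simp add: matrix_vector_mul_assoc)
  have AMv: "A *v (M *v p) = p" for p using MA by (simp add: matrix_vector_mul_assoc)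
  have detA: "det A = 1"
  proof -
    have "det M * det A = 1" using MA det_mul[of M A] by (simp add: det_I)
    then show ?thesis using detM by simp
  qed
  have Mv: "M *v p = vector [p$1 + cot ph * p$2 + c * p$3, p$2 + cot th * p$3, p$3]" for p
    by (simp add: M_def matrix_vector_mult_def sum_3 vec_eq_iff forall_3)
  have Lmem: "p \<in> L \<longleftrightarrow> M *v p \<in> K" for p
  proof
    assume "p \<in> L" then obtain k where "k \<in> K" "p = A *v k" using L A_def by auto
    then show "M *v p \<in> K" using MAv by simp
  next
    assume "M *v p \<in> K" then have "A *v (M *v p) \<in> L" using L A_def by auto
    then show "p \<in> L" using AMv by simp
  qed
  have symK: "- x \<in> K \<longleftrightarrow> x \<in> K" for x using sym[of x] sym[of "-x"] by auto
  define W1 where "W1 = K \<inter> {p. p$3 \<ge> 0 \<and> p$2 - cot th * p$3 \<ge> 0}"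
  define W2 where "W2 = K \<inter> {p. p$3 \<ge> 0 \<and> p$2 - cot th * p$3 \<le> 0}"
  have cW1: "compact W1"
  proof -
    have "{p::real^3. p$3 \<ge> 0 \<and> p$2 - cot th * p$3 \<ge> 0} =
      {p. 0 * p$1 + 0 * p$2 + 1 * p$3 \<ge> 0} \<inter> {p. 0 * p$1 + 1 * p$2 + (- cot th) * p$3 \<ge> 0}" (is "_ = ?R") by auto
    moreover have "closed ?R" by (intro closed_Int closed_hs3)
    ultimately have "closed {p::real^3. p$3 \<ge> 0 \<and> p$2 - cot th * p$3 \<ge> 0}" by simp
    then show ?thesis unfolding W1_def by (rule compact_Int_closed[OF cpt])
  qed
  have cW2: "compact W2"
  proof -
    have "{p::real^3. p$3 \<ge> 0 \<and> p$2 - cot th * p$3 \<le> 0} =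
      {p. 0 * p$1 + 0 * p$2 + 1 * p$3 \<ge> 0} \<inter> {p. 0 * p$1 + (- 1) * p$2 + cot th * p$3 \<ge> 0}" (is "_ = ?R") by auto
    moreover have "closed ?R" by (intro closed_Int closed_hs3)
    ultimately have "closed {p::real^3. p$3 \<ge> 0 \<and> p$2 - cot th * p$3 \<le> 0}" by simp
    then show ?thesis unfolding W2_def by (rule compact_Int_closed[OF cpt])
  qed
  have Mc: "(M *v p)$2 = p$2 + cot th * p$3" "(M *v p)$3 = p$3" for p by (simp_all add: Mv)
  have img1: "L \<inter> {p. p$2 \<ge> 0 \<and> p$3 \<ge> 0} = (\<lambda>x. A *v x) ` W1"
  proof (intro set_eqI iffI)
    fix p assume p: "p \<in> L \<inter> {p. p$2 \<ge> 0 \<and> p$3 \<ge> 0}"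
    then have "M *v p \<in> W1" using Lmem by (simp add: W1_def Mc)
    then show "p \<in> (\<lambda>x. A *v x) ` W1" using AMv[of p] by (metis image_eqI)
  next
    fix p assume "p \<in> (\<lambda>x. A *v x) ` W1"
    then obtain k where k: "k \<in> W1" "p = A *v k" by blast
    then have Mp: "M *v p = k" using MAv by simp
    then show "p \<in> L \<inter> {p. p$2 \<ge> 0 \<and> p$3 \<ge> 0}" using Lmem k Mc[of p] by (auto simp: W1_def)
  qed
  have img2: "L \<inter> {p. p$2 \<le> 0 \<and> p$3 \<ge> 0} = (\<lambda>x. A *v x) ` W2"
  proof (intro set_eqI iffI)
    fix p assume p: "p \<in> L \<inter> {p. p$2 \<le> 0 \<and> p$3 \<ge> 0}"
    then have "M *v p \<in> W2" using Lmem by (simp add: W2_def Mc)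
    then show "p \<in> (\<lambda>x. A *v x) ` W2" using AMv[of p] by (metis image_eqI)
  next
    fix p assume "p \<in> (\<lambda>x. A *v x) ` W2"
    then obtain k where k: "k \<in> W2" "p = A *v k" by blast
    then have Mp: "M *v p = k" using MAv by simp
    then show "p \<in> L \<inter> {p. p$2 \<le> 0 \<and> p$3 \<ge> 0}" using Lmem k Mc[of p] by (auto simp: W2_def)
  qed
  have vW1: "measure lebesgue (L \<inter> {p. p$2 \<ge> 0 \<and> p$3 \<ge> 0}) = measure lebesgue W1"
    unfolding img1 using meas_mat_image3[OF lmeasurable_compact[OF cW1]] detA by simp
  have vW2: "measure lebesgue (L \<inter> {p. p$2 \<le> 0 \<and> p$3 \<ge> 0}) = measure lebesgue W2"
    unfolding img2 using meas_mat_image3[OF lmeasurable_compact[OF cW2]] detA by simp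
  have cL: "compact L"
  proof -
    have "continuous_on K (\<lambda>x. A *v x)"
      by (rule matrix_vector_mult_linear_continuous_on)
    then show ?thesis unfolding L A_def[symmetric] by (rule compact_continuous_image[OF _ cpt])
  qed
  have cD: "compact (L \<inter> {p::real^3. 0 \<le> s1 * p$1 \<and> 0 \<le> s2 * p$2 \<and> 0 \<le> s3 * p$3})" for s1 s2 s3
    by (rule compact_Int_closed[OF cL closed_orthant])
  have D1: "Delta1 L = L \<inter> {p. 0 \<le> 1 * p$1 \<and> 0 \<le> 1 * p$2 \<and> 0 \<le> 1 * p$3}" by (auto simp: Delta1_def)
  have D2: "Delta2 L = L \<inter> {p. 0 \<le> (-1) * p$1 \<and> 0 \<le> 1 * p$2 \<and> 0 \<le> 1 * p$3}" by (auto simp: Delta2_def)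
  have D3: "Delta3 L = L \<inter> {p. 0 \<le> (-1) * p$1 \<and> 0 \<le> (-1) * p$2 \<and> 0 \<le> 1 * p$3}" by (auto simp: Delta3_def)
  have D4: "Delta4 L = L \<inter> {p. 0 \<le> 1 * p$1 \<and> 0 \<le> (-1) * p$2 \<and> 0 \<le> 1 * p$3}" by (auto simp: Delta4_def)
  have mD: "Delta1 L \<in> lmeasurable" "Delta2 L \<in> lmeasurable" "Delta3 L \<in> lmeasurable" "Delta4 L \<in> lmeasurable"
    unfolding D1 D2 D3 D4 by (intro lmeasurable_compact cD)+
  have negx: "negligible {p::real^3. 1 * p$1 + 0 * p$2 + 0 * p$3 = 0}" by (rule neg_plane3) simp
  have m12: "measure lebesgue (Delta1 L) + measure lebesgue (Delta2 L) = measure lebesgue (L \<inter> {p. p$2 \<ge> 0 \<and> p$3 \<ge> 0})"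
  proof -
    have u: "Delta1 L \<union> Delta2 L = L \<inter> {p. p$2 \<ge> 0 \<and> p$3 \<ge> 0}"
      by (auto simp: Delta1_def Delta2_def)
    have "negligible (Delta1 L \<inter> Delta2 L)"
      by (rule negligible_subset[OF negx]) (auto simp: Delta1_def Delta2_def)
    then have z: "measure lebesgue (Delta1 L \<inter> Delta2 L) = 0" by (rule negligible_imp_measure0)
    have "measure lebesgue (Delta1 L \<union> Delta2 L) =
      measure lebesgue (Delta1 L) + measure lebesgue (Delta2 L) - measure lebesgue (Delta1 L \<inter> Delta2 L)"
      using mD by (intro measure_Un3) auto
    then show ?thesis using z u by simp
  qed
  have m34: "measure lebesgue (Delta3 L) + measure lebesgue (Delta4 L) = measure lebesgue (L \<inter> {p. p$2 \<le> 0 \<and> p$3 \<ge> 0})"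
  proof -
    have u: "Delta3 L \<union> Delta4 L = L \<inter> {p. p$2 \<le> 0 \<and> p$3 \<ge> 0}"
      by (auto simp: Delta3_def Delta4_def)
    have "negligible (Delta3 L \<inter> Delta4 L)"
      by (rule negligible_subset[OF negx]) (auto simp: Delta3_def Delta4_def)
    then have z: "measure lebesgue (Delta3 L \<inter> Delta4 L) = 0" by (rule negligible_imp_measure0)
    have "measure lebesgue (Delta3 L \<union> Delta4 L) =
      measure lebesgue (Delta3 L) + measure lebesgue (Delta4 L) - measure lebesgue (Delta3 L \<inter> Delta4 L)"
      using mD by (intro measure_Un3) auto
    then show ?thesis using z u by simp
  qed
  have hh: "(\<lambda>\<beta>. integral {0..pi} (\<lambda>\<alpha>. (radial K (Pt \<alpha> \<beta>)) ^ 3 * sin \<alpha>)) =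
      (\<lambda>z. integral {0..pi} (\<lambda>y. sin y / (gg K (Pt y z))^3))"
    by (intro ext integral_cong) (simp add: radial_rr rr_Pt power_one_over)
  have claim3: "measure lebesgue (Delta1 L) + measure lebesgue (Delta2 L)
           = measure lebesgue (Delta3 L) + measure lebesgue (Delta4 L)"
    unfolding m12 m34 vW1 vW2 W1_def W2_def vol_w[OF ThP] using Theta_prop unfolding hh th_def by simp
  have embz: "emb 0 u = vector [u$1, u$2, 0]" for u by (simp add: emb_def)
  define E1 where "E1 = {u. emb 0 u \<in> K \<and> u$2 \<ge> 0 \<and> u$1 - cot ph * u$2 \<ge> 0}"
  define E2 where "E2 = {u. emb 0 u \<in> K \<and> u$2 \<ge> 0 \<and> u$1 - cot ph * u$2 \<le> 0}"
  define N2 where "N2 = (vector [vector [1, - cot ph], vector [0, 1]] :: real^2^2)"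
  have N2v: "N2 *v u = vector [u$1 - cot ph * u$2, u$2]" for u
    by (simp add: N2_def matrix_vector_mult_def sum_2 vec_eq_iff forall_2)
  have detN2: "det N2 = 1" by (simp add: N2_def det_2)
  have Mz: "M *v vector [a, b, 0] = emb 0 (vector [a + cot ph * b, b])" for a b
    by (simp add: Mv embz)
  have cE1: "compact E1"
  proof -
    have "E1 = {u. emb 0 u \<in> K} \<inter> ({u. 0 * u$1 + 1 * u$2 \<ge> 0} \<inter> {u. 1 * u$1 + (- cot ph) * u$2 \<ge> 0})"
      (is "_ = _ \<inter> ?R") by (auto simp: E1_def)
    moreover have "closed ?R" by (intro closed_Int closed_hs2)
    ultimately show ?thesis using compact_Int_closed[OF compact_embK] by simp
  qed
  have cE2: "compact E2"
  proof -
    have "E2 = {u. emb 0 u \<in> K} \<inter> ({u. 0 * u$1 + 1 * u$2 \<ge> 0} \<inter> {u. (-1) * u$1 + cot ph * u$2 \<ge> 0})"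
      (is "_ = _ \<inter> ?R") by (auto simp: E2_def)
    moreover have "closed ?R" by (intro closed_Int closed_hs2)
    ultimately show ?thesis using compact_Int_closed[OF compact_embK] by simp
  qed
  have za: "{q. vector [q$1, q$2, 0] \<in> L \<inter> {p. p$3 = 0 \<and> p$1 \<ge> 0 \<and> p$2 \<ge> 0}} = (\<lambda>u. N2 *v u) ` E1"
  proof (intro set_eqI iffI)
    fix q :: "real^2" assume "q \<in> {q. vector [q$1, q$2, 0] \<in> L \<inter> {p. p$3 = 0 \<and> p$1 \<ge> 0 \<and> p$2 \<ge> 0}}"
    then have q: "M *v vector [q$1, q$2, 0] \<in> K" "q$1 \<ge> 0" "q$2 \<ge> 0" using Lmem by auto
    define u where "u = (vector [q$1 + cot ph * q$2, q$2] :: real^2)"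
    have "u \<in> E1" using q Mz by (simp add: E1_def u_def)
    moreover have "q = N2 *v u" by (simp add: N2v u_def vec_eq_iff forall_2)
    ultimately show "q \<in> (\<lambda>u. N2 *v u) ` E1" by blast
  next
    fix q assume "q \<in> (\<lambda>u. N2 *v u) ` E1"
    then obtain u where u: "u \<in> E1" "q = N2 *v u" by blast
    have "M *v vector [q$1, q$2, 0] = emb 0 u" using u(2) by (simp add: N2v Mz vec_eq_iff forall_2)
    then show "q \<in> {q. vector [q$1, q$2, 0] \<in> L \<inter> {p. p$3 = 0 \<and> p$1 \<ge> 0 \<and> p$2 \<ge> 0}}"
      using u Lmem by (simp add: E1_def N2v)
  qed
  have zb: "{q. vector [q$1, q$2, 0] \<in> L \<inter> {p. p$3 = 0 \<and> p$1 \<le> 0 \<and> p$2 \<ge> 0}} = (\<lambda>u. N2 *v u) ` E2"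
  proof (intro set_eqI iffI)
    fix q :: "real^2" assume "q \<in> {q. vector [q$1, q$2, 0] \<in> L \<inter> {p. p$3 = 0 \<and> p$1 \<le> 0 \<and> p$2 \<ge> 0}}"
    then have q: "M *v vector [q$1, q$2, 0] \<in> K" "q$1 \<le> 0" "q$2 \<ge> 0" using Lmem by auto
    define u where "u = (vector [q$1 + cot ph * q$2, q$2] :: real^2)"
    have "u \<in> E2" using q Mz by (simp add: E2_def u_def)
    moreover have "q = N2 *v u" by (simp add: N2v u_def vec_eq_iff forall_2)
    ultimately show "q \<in> (\<lambda>u. N2 *v u) ` E2" by blast
  next
    fix q assume "q \<in> (\<lambda>u. N2 *v u) ` E2"
    then obtain u where u: "u \<in> E2" "q = N2 *v u" by blast
    have "M *v vector [q$1, q$2, 0] = emb 0 u" using u(2) by (simp add: N2v Mz vec_eq_iff forall_2)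
    then show "q \<in> {q. vector [q$1, q$2, 0] \<in> L \<inter> {p. p$3 = 0 \<and> p$1 \<le> 0 \<and> p$2 \<ge> 0}}"
      using u Lmem by (simp add: E2_def N2v)
  qed
  have hz: "(\<lambda>\<alpha>. (radial K (Pt \<alpha> 0))\<^sup>2) = (\<lambda>a. 1 / (gg K (Pt a 0))^2)"
    by (simp add: fun_eq_iff radial_rr rr_Pt power_one_over)
  have claim2: "area_z0 (L \<inter> {p. p$3 = 0 \<and> p$1 \<ge> 0 \<and> p$2 \<ge> 0})
           = area_z0 (L \<inter> {p. p$3 = 0 \<and> p$1 \<le> 0 \<and> p$2 \<ge> 0})"
  proof -
    have "area_z0 (L \<inter> {p. p$3 = 0 \<and> p$1 \<ge> 0 \<and> p$2 \<ge> 0}) = measure lebesgue E1"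
      unfolding area_z0_def za using meas_mat_image2[OF lmeasurable_compact[OF cE1]] detN2 by simp
    also have "\<dots> = integral {0..ph} (\<lambda>a. 1 / (gg K (Pt a 0))^2) / 2"
      unfolding E1_def by (rule area_w(1)[OF PhP])
    also have "\<dots> = integral {ph..pi} (\<lambda>a. 1 / (gg K (Pt a 0))^2) / 2"
      using Phi_prop unfolding hz ph_def by simp
    also have "\<dots> = measure lebesgue E2"
      unfolding E2_def by (rule area_w(2)[OF PhP, symmetric])
    also have "\<dots> = area_z0 (L \<inter> {p. p$3 = 0 \<and> p$1 \<le> 0 \<and> p$2 \<ge> 0})"
      unfolding area_z0_def zb using meas_mat_image2[OF lmeasurable_compact[OF cE2]] detN2 by simp
    finally show ?thesis .
  qed
  have sne: "sin th \<noteq> 0" using st by simp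
  have cs: "c * sin th = cot ps" unfolding c_def by (rule one_over_tan[OF sne])
  have cts: "cot th * sin th = cos th" using sne by (simp add: cot_def)
  have embt: "emb th u = vector [u$1, u$2 * cos th, u$2 * sin th]" for u by (simp add: emb_def)
  define F1 where "F1 = {u. emb th u \<in> K \<and> u$2 \<ge> 0 \<and> u$1 - cot ps * u$2 \<ge> 0}"
  define F2 where "F2 = {u. emb th u \<in> K \<and> u$2 \<ge> 0 \<and> u$1 - cot ps * u$2 \<le> 0}"
  define N3 where "N3 = (vector [vector [1, - c * sin th], vector [0, sin th]] :: real^2^2)"
  define N4 where "N4 = (vector [vector [-1, c * sin th], vector [0, - sin th]] :: real^2^2)"
  have N3v: "N3 *v u = vector [u$1 - c * sin th * u$2, sin th * u$2]" for u
    by (simp add: N3_def matrix_vector_mult_def sum_2 vec_eq_iff forall_2)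
  have N4v: "N4 *v u = vector [- u$1 + c * sin th * u$2, - sin th * u$2]" for u
    by (simp add: N4_def matrix_vector_mult_def sum_2 vec_eq_iff forall_2)
  have detN3: "det N3 = sin th" by (simp add: N3_def det_2)
  have detN4: "det N4 = sin th" by (simp add: N4_def det_2)
  have My: "M *v vector [a, 0, b] = emb th (vector [a + c * b, b / sin th])" for a b
    using sne by (simp add: Mv embt vec_eq_iff forall_3 cot_def)
  have cF1: "compact F1"
  proof -
    have "F1 = {u. emb th u \<in> K} \<inter> ({u. 0 * u$1 + 1 * u$2 \<ge> 0} \<inter> {u. 1 * u$1 + (- cot ps) * u$2 \<ge> 0})"
      (is "_ = _ \<inter> ?R") by (auto simp: F1_def)
    moreover have "closed ?R" by (intro closed_Int closed_hs2)
    ultimately show ?thesis using compact_Int_closed[OF compact_embK] by simp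
  qed
  have cF2: "compact F2"
  proof -
    have "F2 = {u. emb th u \<in> K} \<inter> ({u. 0 * u$1 + 1 * u$2 \<ge> 0} \<inter> {u. (-1) * u$1 + cot ps * u$2 \<ge> 0})"
      (is "_ = _ \<inter> ?R") by (auto simp: F2_def)
    moreover have "closed ?R" by (intro closed_Int closed_hs2)
    ultimately show ?thesis using compact_Int_closed[OF compact_embK] by simp
  qed
  have ya: "{q. vector [q$1, 0, q$2] \<in> L \<inter> {p. p$2 = 0 \<and> p$1 \<ge> 0 \<and> p$3 \<ge> 0}} = (\<lambda>u. N3 *v u) ` F1"
  proof (intro set_eqI iffI)
    fix q :: "real^2" assume "q \<in> {q. vector [q$1, 0, q$2] \<in> L \<inter> {p. p$2 = 0 \<and> p$1 \<ge> 0 \<and> p$3 \<ge> 0}}"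
    then have q: "M *v vector [q$1, 0, q$2] \<in> K" "q$1 \<ge> 0" "q$2 \<ge> 0" using Lmem by auto
    define u where "u = (vector [q$1 + c * q$2, q$2 / sin th] :: real^2)"
    have u2: "u$2 \<ge> 0" using q st by (simp add: u_def)
    have u1: "u$1 - cot ps * u$2 = q$1" using sne unfolding u_def cs[symmetric] by simp
    have "u \<in> E" if "E = F1" for E using q My u1 u2 that by (simp add: F1_def u_def)
    moreover have "q = N3 *v u" using sne by (simp add: N3v u_def vec_eq_iff forall_2)
    ultimately show "q \<in> (\<lambda>u. N3 *v u) ` F1" by blast
  next
    fix q assume "q \<in> (\<lambda>u. N3 *v u) ` F1"
    then obtain u where u: "u \<in> F1" "q = N3 *v u" by blast
    have "M *v vector [q$1, 0, q$2] = emb th u" using u(2) sne by (simp add: N3v My)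
    moreover have "q$1 = u$1 - cot ps * u$2" using u(2) by (simp add: N3v cs)
    moreover have "q$2 = sin th * u$2" using u(2) by (simp add: N3v)
    ultimately show "q \<in> {q. vector [q$1, 0, q$2] \<in> L \<inter> {p. p$2 = 0 \<and> p$1 \<ge> 0 \<and> p$3 \<ge> 0}}"
      using u st Lmem by (simp add: F1_def)
  qed
  have yb: "{q. vector [q$1, 0, q$2] \<in> L \<inter> {p. p$2 = 0 \<and> p$1 \<ge> 0 \<and> p$3 \<le> 0}} = (\<lambda>u. N4 *v u) ` F2"
  proof (intro set_eqI iffI)
    fix q :: "real^2" assume "q \<in> {q. vector [q$1, 0, q$2] \<in> L \<inter> {p. p$2 = 0 \<and> p$1 \<ge> 0 \<and> p$3 \<le> 0}}"
    then have q: "M *v vector [q$1, 0, q$2] \<in> K" "q$1 \<ge> 0" "q$2 \<le> 0" using Lmem by auto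
    have neg: "M *v vector [- q$1, 0, - q$2] = - (M *v vector [q$1, 0, q$2])"
      by (simp add: Mv vec_eq_iff forall_3)
    have q': "M *v vector [- q$1, 0, - q$2] \<in> K" unfolding neg symK by (rule q(1))
    define u where "u = (vector [- q$1 - c * q$2, - q$2 / sin th] :: real^2)"
    have u2: "u$2 \<ge> 0" using q st by (simp add: u_def divide_nonpos_pos)
    have u1: "u$1 - cot ps * u$2 = - q$1" using sne unfolding u_def cs[symmetric] by simp
    have "emb th u = M *v vector [- q$1, 0, - q$2]" by (simp add: My u_def)
    then have "u \<in> F2" using q' q u1 u2 by (simp add: F2_def)
    moreover have "q = N4 *v u" using sne by (simp add: N4v u_def vec_eq_iff forall_2)
    ultimately show "q \<in> (\<lambda>u. N4 *v u) ` F2" by blast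
  next
    fix q assume "q \<in> (\<lambda>u. N4 *v u) ` F2"
    then obtain u where u: "u \<in> F2" "q = N4 *v u" by blast
    have e1: "M *v vector [- q$1, 0, - q$2] = emb th u" using u(2) sne by (simp add: N4v My)
    have e2: "M *v vector [- q$1, 0, - q$2] = - (M *v vector [q$1, 0, q$2])"
      by (simp add: Mv vec_eq_iff forall_3)
    have eK: "emb th u \<in> K" using u(1) by (simp add: F2_def)
    then have "- (M *v vector [q$1, 0, q$2]) \<in> K" using e1 e2 by simp
    then have "M *v vector [q$1, 0, q$2] \<in> K" by (simp only: symK)
    moreover have "q$1 = - (u$1 - cot ps * u$2)" using u(2) by (simp add: N4v cs)
    moreover have "q$2 = - (sin th * u$2)" using u(2) by (simp add: N4v)
    ultimately show "q \<in> {q. vector [q$1, 0, q$2] \<in> L \<inter> {p. p$2 = 0 \<and> p$1 \<ge> 0 \<and> p$3 \<le> 0}}"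
      using u st Lmem by (simp add: F2_def)
  qed
  have hy: "(\<lambda>\<alpha>. (radial K (Pt \<alpha> th))\<^sup>2) = (\<lambda>a. 1 / (gg K (Pt a th))^2)"
    by (simp add: fun_eq_iff radial_rr rr_Pt power_one_over)
  have claim1: "area_y0 (L \<inter> {p. p$2 = 0 \<and> p$1 \<ge> 0 \<and> p$3 \<ge> 0})
           = area_y0 (L \<inter> {p. p$2 = 0 \<and> p$1 \<ge> 0 \<and> p$3 \<le> 0})"
  proof -
    have "area_y0 (L \<inter> {p. p$2 = 0 \<and> p$1 \<ge> 0 \<and> p$3 \<ge> 0}) = sin th * measure lebesgue F1"
      unfolding area_y0_def ya using meas_mat_image2[OF lmeasurable_compact[OF cF1]] detN3 st by simp
    also have "measure lebesgue F1 = integral {0..ps} (\<lambda>a. 1 / (gg K (Pt a th))^2) / 2"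
      unfolding F1_def by (rule area_w(1)[OF PsP])
    also have "\<dots> = integral {ps..pi} (\<lambda>a. 1 / (gg K (Pt a th))^2) / 2"
      using Psi_prop unfolding th_def[symmetric] hy ps_def by simp
    also have "\<dots> = measure lebesgue F2"
      unfolding F2_def by (rule area_w(2)[OF PsP, symmetric])
    also have "sin th * \<dots> = area_y0 (L \<inter> {p. p$2 = 0 \<and> p$1 \<ge> 0 \<and> p$3 \<le> 0})"
      unfolding area_y0_def yb using meas_mat_image2[OF lmeasurable_compact[OF cF2]] detN4 st by simp
    finally show ?thesis .
  qed
  show ?thesis using claim1 claim2 claim3 by blast
qed

end

theorem proposition5p2:
  fixes K L :: "(real^3) set"
  assumes "K \<in> Khat"
    and "L = (\<lambda>p. Amat K *v p) ` K"
  shows "area_y0 (L \<inter> {p. p$2 = 0 \<and> p$1 \<ge> 0 \<and> p$3 \<ge> 0})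
           = area_y0 (L \<inter> {p. p$2 = 0 \<and> p$1 \<ge> 0 \<and> p$3 \<le> 0}) \<and>
         area_z0 (L \<inter> {p. p$3 = 0 \<and> p$1 \<ge> 0 \<and> p$2 \<ge> 0})
           = area_z0 (L \<inter> {p. p$3 = 0 \<and> p$1 \<le> 0 \<and> p$2 \<ge> 0}) \<and>
         measure lebesgue (Delta1 L) + measure lebesgue (Delta2 L)
           = measure lebesgue (Delta3 L) + measure lebesgue (Delta4 L)"
proof -
  obtain r where "kb K r" using Khat_kb(1)[OF assms(1)] by blast
  then interpret kb K r .
  show ?thesis by (rule main[OF assms(2)])
qed

end
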